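(* Let $T$ be a left pre-Hopf monad on a monoidal category $\mathcal C$. The following are equivalent: (i) the functor $\mathfrak h^l\colon\mathcal C\to\mathrm{HM}^l(T)$, $X\mapsto(TX,\mu_X,T_2(\mathbb 1,X))$, is an equivalence of categories; (ii) $T$ is conservative, every left Hopf $T$-module admits a coinvariant part, and $T$ preserves coinvariant parts of left Hopf $T$-modules. If these hold, the functor $\mathbb M\mapsto\mathbb M_T$ (coinvariant part) is quasi-inverse to $\mathfrak h^l$.
   Context: Monoidal categories are strict. A bimonad is a monad $(T,\mu,\eta)$ with comonoidal structure $T_2(X,Y)\colon T(X\otimes Y)\to TX\otimes TY$, $T_0\colon T\mathbb 1\to\mathbb 1$ making $\mu,\eta$ comonoidal. $T$ is a left pre-Hopf monad if $H^l_{\mathbb 1,X}=(T\mathbb 1\otimes\mu_X)T_2(\mathbb 1,TX)$ is invertible for all $X$. $T\mathbb 1$ is a coalgebra in $\mathcal C$ with coproduct $T_2(\mathbb 1,\mathbb 1)$ and counit $T_0$. A left Hopf $T$-module is a triple $(M,r,\rho)$ with $(M,r)$ a $T$-module ($rT(r)=r\mu_M$, $r\eta_M=\mathrm{id}$), $(M,\rho)$ a left $T\mathbb 1$-comodule in $\mathcal C$, and $\rho r=(\mu_{\mathbb 1}\otimes r)T_2(T\mathbb 1,M)T(\rho)$; morphisms are $f\colon M\to N$ with $fr=sT(f)$ and $(T\mathbb 1\otimes f)\rho=\varrho f$; these form the category $\mathrm{HM}^l(T)$. The coinvariant part of $\mathbb M=(M,r,\rho)$ is an equalizer $i\colon\mathbb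 M_T\to M$ of the pair $\eta_{\mathbb 1}\otimes M,\ \rho\colon M\rightrightarrows T\mathbb 1\otimes M$. $T$ preserves coinvariant parts if whenever such an equalizer $i$ exists, $T(i)$ is an equalizer of $T(\eta_{\mathbb 1}\otimes M),T(\rho)$. Conservative: reflects isomorphisms. *)

theory Defs
  imports Main
begin

record ('o, 'm) cat =
  Obj :: "'o set"
  Arr :: "'m set"
  Src :: "'m \<Rightarrow> 'o"
  Tgt :: "'m \<Rightarrow> 'o"
  Idt :: "'o \<Rightarrow> 'm"
  Cmp :: "'m \<Rightarrow> 'm \<Rightarrow> 'm"   (* Cmp C g f = g \<circ> f *)

definition hom :: "('o, 'm, 'z) cat_scheme \<Rightarrow> 'o \<Rightarrow> 'o \<Rightarrow> 'm set" where
  "hom C a b = {f \<in> Arr C. Src C f = a \<and> Tgt C f = b}"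

definition category :: "('o, 'm, 'z) cat_scheme \<Rightarrow> bool" where
  "category C \<longleftrightarrow>
     (\<forall>f\<in>Arr C. Src C f \<in> Obj C \<and> Tgt C f \<in> Obj C) \<and>
     (\<forall>a\<in>Obj C. Idt C a \<in> hom C a a) \<and>
     (\<forall>f\<in>Arr C. \<forall>g\<in>Arr C. Tgt C f = Src C g \<longrightarrow> Cmp C g f \<in> hom C (Src C f) (Tgt C g)) \<and>
     (\<forall>f\<in>Arr C. Cmp C (Idt C (Tgt C f)) f = f \<and> Cmp C f (Idt C (Src C f)) = f) \<and>
     (\<forall>f\<in>Arr C. \<forall>g\<in>Arr C. \<forall>h\<in>Arr C. Tgt C f = Src C g \<longrightarrow> Tgt C g = Src C h \<longrightarrow>
        Cmp C h (Cmp C g f) = Cmp C (Cmp C h g) f)"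

definition iso :: "('o, 'm, 'z) cat_scheme \<Rightarrow> 'm \<Rightarrow> bool" where
  "iso C f \<longleftrightarrow> f \<in> Arr C \<and>
     (\<exists>g\<in>hom C (Tgt C f) (Src C f). Cmp C g f = Idt C (Src C f) \<and> Cmp C f g = Idt C (Tgt C f))"

definition "functor" :: "('oa, 'ma, 'za) cat_scheme \<Rightarrow> ('ob, 'mb, 'zb) cat_scheme \<Rightarrow>
    ('oa \<Rightarrow> 'ob) \<Rightarrow> ('ma \<Rightarrow> 'mb) \<Rightarrow> bool" where
  "functor A B FO FM \<longleftrightarrow> category A \<and> category B \<and>
     (\<forall>a\<in>Obj A. FO a \<in> Obj B) \<and>
     (\<forall>f\<in>Arr A. FM f \<in> hom B (FO (Src A f)) (FO (Tgt A f))) \<and>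
     (\<forall>a\<in>Obj A. FM (Idt A a) = Idt B (FO a)) \<and>
     (\<forall>f\<in>Arr A. \<forall>g\<in>Arr A. Tgt A f = Src A g \<longrightarrow> FM (Cmp A g f) = Cmp B (FM g) (FM f))"

definition nat_iso :: "('oa, 'ma, 'za) cat_scheme \<Rightarrow> ('ob, 'mb, 'zb) cat_scheme \<Rightarrow>
    ('oa \<Rightarrow> 'ob) \<Rightarrow> ('ma \<Rightarrow> 'mb) \<Rightarrow> ('oa \<Rightarrow> 'ob) \<Rightarrow> ('ma \<Rightarrow> 'mb) \<Rightarrow> ('oa \<Rightarrow> 'mb) \<Rightarrow> bool" where
  "nat_iso A B FO FM GO GM phi \<longleftrightarrow>
     (\<forall>a\<in>Obj A. phi a \<in> hom B (FO a) (GO a) \<and> iso B (phi a)) \<and>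
     (\<forall>f\<in>Arr A. Cmp B (phi (Tgt A f)) (FM f) = Cmp B (GM f) (phi (Src A f)))"

definition quasi_inverse :: "('oa, 'ma, 'za) cat_scheme \<Rightarrow> ('ob, 'mb, 'zb) cat_scheme \<Rightarrow>
    ('oa \<Rightarrow> 'ob) \<Rightarrow> ('ma \<Rightarrow> 'mb) \<Rightarrow> ('ob \<Rightarrow> 'oa) \<Rightarrow> ('mb \<Rightarrow> 'ma) \<Rightarrow> bool" where
  "quasi_inverse A B FO FM GO GM \<longleftrightarrow> functor A B FO FM \<and> functor B A GO GM \<and>
     (\<exists>phi. nat_iso A A (\<lambda>a. a) (\<lambda>f. f) (GO \<circ> FO) (GM \<circ> FM) phi) \<and>
     (\<exists>psi. nat_iso B B (\<lambda>b. b) (\<lambda>f. f) (FO \<circ> GO) (FM \<circ> GM) psi)"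

definition equivalence :: "('oa, 'ma, 'za) cat_scheme \<Rightarrow> ('ob, 'mb, 'zb) cat_scheme \<Rightarrow>
    ('oa \<Rightarrow> 'ob) \<Rightarrow> ('ma \<Rightarrow> 'mb) \<Rightarrow> bool" where
  "equivalence A B FO FM \<longleftrightarrow>
     (\<exists>(GO :: 'ob \<Rightarrow> 'oa) (GM :: 'mb \<Rightarrow> 'ma). quasi_inverse A B FO FM GO GM)"

definition is_equalizer :: "('o, 'm, 'z) cat_scheme \<Rightarrow> 'm \<Rightarrow> 'm \<Rightarrow> 'o \<Rightarrow> 'm \<Rightarrow> bool" where
  "is_equalizer C f g E i \<longleftrightarrow>
     f \<in> Arr C \<and> g \<in> hom C (Src C f) (Tgt C f) \<and>
     i \<in> hom C E (Src C f) \<and> Cmp C f i = Cmp C g i \<and>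
     (\<forall>Z\<in>Obj C. \<forall>k\<in>hom C Z (Src C f). Cmp C f k = Cmp C g k \<longrightarrow>
        (\<exists>!u. u \<in> hom C Z E \<and> Cmp C i u = k))"

record ('o, 'm) mcat = "('o, 'm) cat" +
  tns :: "'o \<Rightarrow> 'o \<Rightarrow> 'o"
  tnm :: "'m \<Rightarrow> 'm \<Rightarrow> 'm"
  unt :: "'o"

definition strict_monoidal :: "('o, 'm, 'z) mcat_scheme \<Rightarrow> bool" where
  "strict_monoidal C \<longleftrightarrow> category C \<and> unt C \<in> Obj C \<and>
     (\<forall>a\<in>Obj C. \<forall>b\<in>Obj C. tns C a b \<in> Obj C) \<and>
     (\<forall>f\<in>Arr C. \<forall>g\<in>Arr C. tnm C f g \<in> hom C (tns C (Src C f) (Src C g)) (tns C (Tgt C f) (Tgt C g))) \<and>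
     (\<forall>a\<in>Obj C. \<forall>b\<in>Obj C. tnm C (Idt C a) (Idt C b) = Idt C (tns C a b)) \<and>
     (\<forall>f\<in>Arr C. \<forall>f'\<in>Arr C. \<forall>g\<in>Arr C. \<forall>g'\<in>Arr C.
        Tgt C f = Src C f' \<longrightarrow> Tgt C g = Src C g' \<longrightarrow>
        tnm C (Cmp C f' f) (Cmp C g' g) = Cmp C (tnm C f' g') (tnm C f g)) \<and>
     (\<forall>a\<in>Obj C. \<forall>b\<in>Obj C. \<forall>c\<in>Obj C. tns C (tns C a b) c = tns C a (tns C b c)) \<and>
     (\<forall>f\<in>Arr C. \<forall>g\<in>Arr C. \<forall>h\<in>Arr C. tnm C (tnm C f g) h = tnm C f (tnm C g h)) \<and>
     (\<forall>a\<in>Obj C. tns C (unt C) a = a \<and> tns C a (unt C) = a) \<and>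
     (\<forall>f\<in>Arr C. tnm C (Idt C (unt C)) f = f \<and> tnm C f (Idt C (unt C)) = f)"

record ('o, 'm) bimonad_data =
  TO :: "'o \<Rightarrow> 'o"
  TM :: "'m \<Rightarrow> 'm"
  mu :: "'o \<Rightarrow> 'm"
  eta :: "'o \<Rightarrow> 'm"
  T2 :: "'o \<Rightarrow> 'o \<Rightarrow> 'm"
  T0 :: "'m"

definition bimonad :: "('o, 'm, 'z) mcat_scheme \<Rightarrow> ('o, 'm, 'w) bimonad_data_scheme \<Rightarrow> bool" where
  "bimonad C T \<longleftrightarrow> strict_monoidal C \<and> functor C C (TO T) (TM T) \<and>
     \<comment> \<open>monad structure\<close>
     (\<forall>X\<in>Obj C. mu T X \<in> hom C (TO T (TO T X)) (TO T X) \<and> eta T X \<in> hom C X (TO T X)) \<and>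
     (\<forall>f\<in>Arr C. Cmp C (mu T (Tgt C f)) (TM T (TM T f)) = Cmp C (TM T f) (mu T (Src C f)) \<and>
                Cmp C (eta T (Tgt C f)) f = Cmp C (TM T f) (eta T (Src C f))) \<and>
     (\<forall>X\<in>Obj C. Cmp C (mu T X) (TM T (mu T X)) = Cmp C (mu T X) (mu T (TO T X)) \<and>
                Cmp C (mu T X) (eta T (TO T X)) = Idt C (TO T X) \<and>
                Cmp C (mu T X) (TM T (eta T X)) = Idt C (TO T X)) \<and>
     \<comment> \<open>comonoidal structure\<close>
     (\<forall>X\<in>Obj C. \<forall>Y\<in>Obj C. T2 T X Y \<in> hom C (TO T (tns C X Y)) (tns C (TO T X) (TO T Y))) \<and>
     (\<forall>f\<in>Arr C. \<forall>g\<in>Arr C.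
        Cmp C (T2 T (Tgt C f) (Tgt C g)) (TM T (tnm C f g)) =
        Cmp C (tnm C (TM T f) (TM T g)) (T2 T (Src C f) (Src C g))) \<and>
     T0 T \<in> hom C (TO T (unt C)) (unt C) \<and>
     (\<forall>X\<in>Obj C. \<forall>Y\<in>Obj C. \<forall>Z\<in>Obj C.
        Cmp C (tnm C (T2 T X Y) (Idt C (TO T Z))) (T2 T (tns C X Y) Z) =
        Cmp C (tnm C (Idt C (TO T X)) (T2 T Y Z)) (T2 T X (tns C Y Z))) \<and>
     (\<forall>X\<in>Obj C. Cmp C (tnm C (T0 T) (Idt C (TO T X))) (T2 T (unt C) X) = Idt C (TO T X) \<and>
                Cmp C (tnm C (Idt C (TO T X)) (T0 T)) (T2 T X (unt C)) = Idt C (TO T X)) \<and>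
     \<comment> \<open>mu and eta are comonoidal\<close>
     (\<forall>X\<in>Obj C. \<forall>Y\<in>Obj C.
        Cmp C (T2 T X Y) (mu T (tns C X Y)) =
        Cmp C (tnm C (mu T X) (mu T Y)) (Cmp C (T2 T (TO T X) (TO T Y)) (TM T (T2 T X Y))) \<and>
        Cmp C (T2 T X Y) (eta T (tns C X Y)) = tnm C (eta T X) (eta T Y)) \<and>
     Cmp C (T0 T) (mu T (unt C)) = Cmp C (T0 T) (TM T (T0 T)) \<and>
     Cmp C (T0 T) (eta T (unt C)) = Idt C (unt C)"

definition left_pre_hopf :: "('o, 'm, 'z) mcat_scheme \<Rightarrow> ('o, 'm, 'w) bimonad_data_scheme \<Rightarrow> bool" where
  "left_pre_hopf C T \<longleftrightarrow> bimonad C T \<and>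
     (\<forall>X\<in>Obj C. iso C (Cmp C (tnm C (Idt C (TO T (unt C))) (mu T X)) (T2 T (unt C) (TO T X))))"

definition t_module :: "('o, 'm, 'z) mcat_scheme \<Rightarrow> ('o, 'm, 'w) bimonad_data_scheme \<Rightarrow> 'o \<Rightarrow> 'm \<Rightarrow> bool" where
  "t_module C T M r \<longleftrightarrow> M \<in> Obj C \<and> r \<in> hom C (TO T M) M \<and>
     Cmp C r (TM T r) = Cmp C r (mu T M) \<and> Cmp C r (eta T M) = Idt C M"

text \<open>Left comodule over the coalgebra T1 (coproduct T_2(1,1), counit T_0).\<close>
definition t1_comodule :: "('o, 'm, 'z) mcat_scheme \<Rightarrow> ('o, 'm, 'w) bimonad_data_scheme \<Rightarrow> 'o \<Rightarrow> 'm \<Rightarrow> bool" where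
  "t1_comodule C T M \<rho> \<longleftrightarrow> M \<in> Obj C \<and> \<rho> \<in> hom C M (tns C (TO T (unt C)) M) \<and>
     Cmp C (tnm C (T2 T (unt C) (unt C)) (Idt C M)) \<rho> = Cmp C (tnm C (Idt C (TO T (unt C))) \<rho>) \<rho> \<and>
     Cmp C (tnm C (T0 T) (Idt C M)) \<rho> = Idt C M"

definition hopf_module :: "('o, 'm, 'z) mcat_scheme \<Rightarrow> ('o, 'm, 'w) bimonad_data_scheme \<Rightarrow> 'o \<times> 'm \<times> 'm \<Rightarrow> bool" where
  "hopf_module C T MM \<longleftrightarrow> (case MM of (M, r, \<rho>) \<Rightarrow>
     t_module C T M r \<and> t1_comodule C T M \<rho> \<and>
     Cmp C \<rho> r = Cmp C (tnm C (mu T (unt C)) r) (Cmp C (T2 T (TO T (unt C)) M) (TM T \<rho>)))"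

definition hopf_morphism :: "('o, 'm, 'z) mcat_scheme \<Rightarrow> ('o, 'm, 'w) bimonad_data_scheme \<Rightarrow>
    'o \<times> 'm \<times> 'm \<Rightarrow> 'o \<times> 'm \<times> 'm \<Rightarrow> 'm \<Rightarrow> bool" where
  "hopf_morphism C T MM NN f \<longleftrightarrow> (case MM of (M, r, \<rho>) \<Rightarrow> case NN of (N, s, \<sigma>) \<Rightarrow>
     f \<in> hom C M N \<and> Cmp C f r = Cmp C s (TM T f) \<and>
     Cmp C (tnm C (Idt C (TO T (unt C))) f) \<rho> = Cmp C \<sigma> f)"

text \<open>The category HM^l(T): arrows are triples (source, target, underlying morphism).\<close>
definition HM :: "('o, 'm, 'z) mcat_scheme \<Rightarrow> ('o, 'm, 'w) bimonad_data_scheme \<Rightarrow>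
    ('o \<times> 'm \<times> 'm, ('o \<times> 'm \<times> 'm) \<times> ('o \<times> 'm \<times> 'm) \<times> 'm) cat" where
  "HM C T = \<lparr> Obj = {MM. hopf_module C T MM},
             Arr = {(MM, NN, f). hopf_module C T MM \<and> hopf_module C T NN \<and> hopf_morphism C T MM NN f},
             Src = (\<lambda>F. fst F),
             Tgt = (\<lambda>F. fst (snd F)),
             Idt = (\<lambda>MM. (MM, MM, Idt C (fst MM))),
             Cmp = (\<lambda>G F. (fst F, fst (snd G), Cmp C (snd (snd G)) (snd (snd F)))) \<rparr>"

definition hlO :: "('o, 'm, 'z) mcat_scheme \<Rightarrow> ('o, 'm, 'w) bimonad_data_scheme \<Rightarrow> 'o \<Rightarrow> 'o \<times> 'm \<times> 'm" where
  "hlO C T X = (TO T X, mu T X, T2 T (unt C) X)"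

definition hlM :: "('o, 'm, 'z) mcat_scheme \<Rightarrow> ('o, 'm, 'w) bimonad_data_scheme \<Rightarrow>
    'm \<Rightarrow> ('o \<times> 'm \<times> 'm) \<times> ('o \<times> 'm \<times> 'm) \<times> 'm" where
  "hlM C T f = (hlO C T (Src C f), hlO C T (Tgt C f), TM T f)"

definition coinvariant_part :: "('o, 'm, 'z) mcat_scheme \<Rightarrow> ('o, 'm, 'w) bimonad_data_scheme \<Rightarrow>
    'o \<times> 'm \<times> 'm \<Rightarrow> 'o \<Rightarrow> 'm \<Rightarrow> bool" where
  "coinvariant_part C T MM E i \<longleftrightarrow> (case MM of (M, r, \<rho>) \<Rightarrow>
     is_equalizer C (tnm C (eta T (unt C)) (Idt C M)) \<rho> E i)"

definition has_coinvariant_parts :: "('o, 'm, 'z) mcat_scheme \<Rightarrow> ('o, 'm, 'w) bimonad_data_scheme \<Rightarrow> bool" where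
  "has_coinvariant_parts C T \<longleftrightarrow>
     (\<forall>MM. hopf_module C T MM \<longrightarrow> (\<exists>E i. coinvariant_part C T MM E i))"

definition preserves_coinvariant_parts :: "('o, 'm, 'z) mcat_scheme \<Rightarrow> ('o, 'm, 'w) bimonad_data_scheme \<Rightarrow> bool" where
  "preserves_coinvariant_parts C T \<longleftrightarrow>
     (\<forall>M r \<rho> E i. hopf_module C T (M, r, \<rho>) \<longrightarrow> coinvariant_part C T (M, r, \<rho>) E i \<longrightarrow>
        is_equalizer C (TM T (tnm C (eta T (unt C)) (Idt C M))) (TM T \<rho>) (TO T E) (TM T i))"

definition conservative :: "('o, 'm, 'z) mcat_scheme \<Rightarrow> ('o, 'm, 'w) bimonad_data_scheme \<Rightarrow> bool" where
  "conservative C T \<longleftrightarrow> (\<forall>f\<in>Arr C. iso C (TM T f) \<longrightarrow> iso C f)"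

text \<open>Any choice of coinvariant parts gives such a functor.\<close>
definition coinvariant_functor :: "('o, 'm, 'z) mcat_scheme \<Rightarrow> ('o, 'm, 'w) bimonad_data_scheme \<Rightarrow>
    ('o \<times> 'm \<times> 'm \<Rightarrow> 'o) \<Rightarrow> (('o \<times> 'm \<times> 'm) \<times> ('o \<times> 'm \<times> 'm) \<times> 'm \<Rightarrow> 'm) \<Rightarrow> ('o \<times> 'm \<times> 'm \<Rightarrow> 'm) \<Rightarrow> bool" where
  "coinvariant_functor C T GO GM \<iota> \<longleftrightarrow> functor (HM C T) C GO GM \<and>
     (\<forall>MM\<in>Obj (HM C T). coinvariant_part C T MM (GO MM) (\<iota> MM)) \<and>
     (\<forall>F\<in>Arr (HM C T). Cmp C (\<iota> (Tgt (HM C T) F)) (GM F) = Cmp C (snd (snd F)) (\<iota> (Src (HM C T) F)))"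

end

theory Submission
  imports Defs
begin

locale cat =
  fixes C :: "('o, 'm, 'z) cat_scheme"
  assumes category: "category C"
begin

abbreviation arr where "arr f \<equiv> f \<in> Arr C"
abbreviation obj where "obj a \<equiv> a \<in> Obj C"
abbreviation dom where "dom \<equiv> Src C"
abbreviation cod where "cod \<equiv> Tgt C"
abbreviation idt where "idt \<equiv> Idt C"
abbreviation comp (infixr "\<cdot>" 55) where "g \<cdot> f \<equiv> Cmp C g f"

lemma hom_iff[simp]: "f \<in> hom C a b \<longleftrightarrow> arr f \<and> dom f = a \<and> cod f = b"
  by (auto simp: hom_def)

lemma obj_dom[simp]: "arr f \<Longrightarrow> obj (dom f)" and obj_cod[simp]: "arr f \<Longrightarrow> obj (cod f)"
  using category by (auto simp: category_def)

lemma arr_idt[simp]: "obj a \<Longrightarrow> arr (idt a)" and dom_idt[simp]: "obj a \<Longrightarrow> dom (idt a) = a"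
  and cod_idt[simp]: "obj a \<Longrightarrow> cod (idt a) = a"
  using category by (auto simp: category_def hom_def)

lemma arr_comp[simp]: "arr f \<Longrightarrow> arr g \<Longrightarrow> dom g = cod f \<Longrightarrow> arr (g \<cdot> f)"
  and dom_comp[simp]: "arr f \<Longrightarrow> arr g \<Longrightarrow> dom g = cod f \<Longrightarrow> dom (g \<cdot> f) = dom f"
  and cod_comp[simp]: "arr f \<Longrightarrow> arr g \<Longrightarrow> dom g = cod f \<Longrightarrow> cod (g \<cdot> f) = cod g"
proof -
  assume a: "arr f" "arr g" "dom g = cod f"
  have "\<forall>f\<in>Arr C. \<forall>g\<in>Arr C. Tgt C f = Src C g \<longrightarrow> Cmp C g f \<in> hom C (Src C f) (Tgt C g)"
    using category by (simp add: category_def)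
  hence "g \<cdot> f \<in> hom C (dom f) (cod g)" using a by auto
  thus "arr (g \<cdot> f)" "dom (g \<cdot> f) = dom f" "cod (g \<cdot> f) = cod g" by (auto simp: hom_def)
qed

lemma comp_idt_left[simp]: "arr f \<Longrightarrow> cod f = a \<Longrightarrow> idt a \<cdot> f = f"
  and comp_idt_right[simp]: "arr f \<Longrightarrow> dom f = a \<Longrightarrow> f \<cdot> idt a = f"
  using category unfolding category_def by blast+

lemma assoc[simp]: "arr f \<Longrightarrow> arr g \<Longrightarrow> arr h \<Longrightarrow> dom g = cod f \<Longrightarrow> dom h = cod g \<Longrightarrow>
   (h \<cdot> g) \<cdot> f = h \<cdot> (g \<cdot> f)"
proof -
  assume a: "arr f" "arr g" "arr h" "dom g = cod f" "dom h = cod g"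
  have "\<forall>f\<in>Arr C. \<forall>g\<in>Arr C. \<forall>h\<in>Arr C. Tgt C f = Src C g \<longrightarrow> Tgt C g = Src C h \<longrightarrow>
        Cmp C h (Cmp C g f) = Cmp C (Cmp C h g) f" using category by (simp add: category_def)
  thus ?thesis using a by auto
qed

lemma tail2: "g \<cdot> f = R \<Longrightarrow> arr x \<Longrightarrow> arr f \<Longrightarrow> arr g \<Longrightarrow> dom f = cod x \<Longrightarrow> dom g = cod f \<Longrightarrow>
   g \<cdot> (f \<cdot> x) = R \<cdot> x"
  by (drule sym) simp

lemma tail3: "g \<cdot> (f \<cdot> e) = R \<Longrightarrow> arr x \<Longrightarrow> arr e \<Longrightarrow> arr f \<Longrightarrow> arr g \<Longrightarrow> dom e = cod x \<Longrightarrow>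
   dom f = cod e \<Longrightarrow> dom g = cod f \<Longrightarrow> g \<cdot> (f \<cdot> (e \<cdot> x)) = R \<cdot> x"
  by (drule sym) simp

lemma tail4: "g \<cdot> (f \<cdot> (e \<cdot> d)) = R \<Longrightarrow> arr x \<Longrightarrow> arr d \<Longrightarrow> arr e \<Longrightarrow> arr f \<Longrightarrow> arr g \<Longrightarrow>
   dom d = cod x \<Longrightarrow> dom e = cod d \<Longrightarrow>
   dom f = cod e \<Longrightarrow> dom g = cod f \<Longrightarrow> g \<cdot> (f \<cdot> (e \<cdot> (d \<cdot> x))) = R \<cdot> x"
  by (drule sym) simp

definition inv where "inv f = (SOME g. g \<in> hom C (cod f) (dom f) \<and> g \<cdot> f = idt (dom f) \<and> f \<cdot> g = idt (cod f))"

lemma iso_inv: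
  assumes "iso C f"
  shows "arr (inv f)" "dom (inv f) = cod f" "cod (inv f) = dom f"
    "inv f \<cdot> f = idt (dom f)" "f \<cdot> inv f = idt (cod f)"
proof -
  have "\<exists>g. g \<in> hom C (cod f) (dom f) \<and> g \<cdot> f = idt (dom f) \<and> f \<cdot> g = idt (cod f)"
    using assms by (auto simp: iso_def)
  from someI_ex[OF this] show "arr (inv f)" "dom (inv f) = cod f" "cod (inv f) = dom f"
    "inv f \<cdot> f = idt (dom f)" "f \<cdot> inv f = idt (cod f)" by (auto simp: inv_def)
qed

lemma iso_arr[simp]: "iso C f \<Longrightarrow> arr f" by (simp add: iso_def)

lemma inv_simps[simp]: "iso C f \<Longrightarrow> arr (inv f)" "iso C f \<Longrightarrow> dom (inv f) = cod f"
  "iso C f \<Longrightarrow> cod (inv f) = dom f"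
  "iso C f \<Longrightarrow> inv f \<cdot> f = idt (dom f)" "iso C f \<Longrightarrow> f \<cdot> inv f = idt (cod f)"
  using iso_inv by auto

lemma inv_tail[simp]:
  "iso C f \<Longrightarrow> arr x \<Longrightarrow> cod x = dom f \<Longrightarrow> inv f \<cdot> (f \<cdot> x) = x"
  "iso C f \<Longrightarrow> arr x \<Longrightarrow> cod x = cod f \<Longrightarrow> f \<cdot> (inv f \<cdot> x) = x"
  by (simp_all add: tail2[OF inv_simps(4)] tail2[OF inv_simps(5)])

lemma isoI: "arr f \<Longrightarrow> arr g \<Longrightarrow> dom g = cod f \<Longrightarrow> cod g = dom f \<Longrightarrow> g \<cdot> f = idt (dom f) \<Longrightarrow>
   f \<cdot> g = idt (cod f) \<Longrightarrow> iso C f"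
  unfolding iso_def by auto

lemma iso_inv_iso[simp]: "iso C f \<Longrightarrow> iso C (inv f)"
  by (rule isoI[where g=f]) auto

lemma iso_comp[simp]: "iso C f \<Longrightarrow> iso C g \<Longrightarrow> dom g = cod f \<Longrightarrow> iso C (g \<cdot> f)"
  by (rule isoI[where g="inv f \<cdot> inv g"]) auto

lemma iso_idt[simp]: "obj a \<Longrightarrow> iso C (idt a)"
  by (rule isoI[where g="idt a"]) auto

lemma iso_cancel_left:
  "iso C f \<Longrightarrow> arr x \<Longrightarrow> arr y \<Longrightarrow> cod x = dom f \<Longrightarrow> cod y = dom f \<Longrightarrow> f \<cdot> x = f \<cdot> y \<Longrightarrow> x = y"
proof -
  assume a: "iso C f" "arr x" "arr y" "cod x = dom f" "cod y = dom f" "f \<cdot> x = f \<cdot> y"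
  have "inv f \<cdot> (f \<cdot> x) = inv f \<cdot> (f \<cdot> y)" using a by simp
  thus ?thesis using a(1-5) by simp
qed

lemma iso_cancel_right:
  "iso C f \<Longrightarrow> arr x \<Longrightarrow> arr y \<Longrightarrow> dom x = cod f \<Longrightarrow> dom y = cod f \<Longrightarrow> x \<cdot> f = y \<cdot> f \<Longrightarrow> x = y"
proof -
  assume a: "iso C f" "arr x" "arr y" "dom x = cod f" "dom y = cod f" "x \<cdot> f = y \<cdot> f"
  have "(x \<cdot> f) \<cdot> inv f = (y \<cdot> f) \<cdot> inv f" using a by simp
  thus ?thesis using a(1-5) by simp
qed

lemma inv_unique: "iso C f \<Longrightarrow> arr g \<Longrightarrow> dom g = cod f \<Longrightarrow> g \<cdot> f = idt (dom f) \<Longrightarrow> g = inv f"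
proof -
  assume a: "iso C f" "arr g" "dom g = cod f" "g \<cdot> f = idt (dom f)"
  have "(g \<cdot> f) \<cdot> inv f = g" using a(1-3) by simp
  thus ?thesis using a(1-4) by simp
qed

lemma eq_props:
  assumes "is_equalizer C f g E i"
  shows "arr f" "arr g" "dom g = dom f" "cod g = cod f" "arr i" "dom i = E" "cod i = dom f"
    "f \<cdot> i = g \<cdot> i" "obj E"
proof -
  have h: "arr f \<and> g \<in> hom C (dom f) (cod f) \<and> i \<in> hom C E (dom f) \<and> f \<cdot> i = g \<cdot> i"
    using assms unfolding is_equalizer_def by blast
  thus "arr f" "arr g" "dom g = dom f" "cod g = cod f" "arr i" "dom i = E" "cod i = dom f"
    "f \<cdot> i = g \<cdot> i" by simp_all
  show "obj E" using h obj_dom[of i] by simp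
qed

lemma eq_mono:
  assumes e: "is_equalizer C f g E i" and "arr u" "arr v" "dom u = dom v" "cod u = E" "cod v = E"
    and "i \<cdot> u = i \<cdot> v"
  shows "u = v"
proof -
  note p = eq_props[OF e]
  have k: "f \<cdot> (i \<cdot> u) = g \<cdot> (i \<cdot> u)" using assms p by (simp add: tail2[OF p(8)])
  have "\<forall>Z\<in>Obj C. \<forall>k\<in>hom C Z (dom f). f \<cdot> k = g \<cdot> k \<longrightarrow> (\<exists>!u. u \<in> hom C Z E \<and> i \<cdot> u = k)"
    using e unfolding is_equalizer_def by blast
  hence "\<exists>!w. w \<in> hom C (dom u) E \<and> i \<cdot> w = i \<cdot> u"
    using k assms p by simp
  thus ?thesis using assms by auto
qed

lemma eq_lift:
  assumes e: "is_equalizer C f g E i" and "arr k" "cod k = dom f" "f \<cdot> k = g \<cdot> k"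
  shows "\<exists>u. arr u \<and> dom u = dom k \<and> cod u = E \<and> i \<cdot> u = k"
proof -
  have "\<forall>Z\<in>Obj C. \<forall>k\<in>hom C Z (dom f). f \<cdot> k = g \<cdot> k \<longrightarrow> (\<exists>!u. u \<in> hom C Z E \<and> i \<cdot> u = k)"
    using e unfolding is_equalizer_def by blast
  hence "\<exists>!u. u \<in> hom C (dom k) E \<and> i \<cdot> u = k" using assms by simp
  thus ?thesis by auto
qed

lemma eq_comparison_iso:
  assumes e: "is_equalizer C f g E i" and e': "is_equalizer C f g E' i'"
    and u: "arr u" "dom u = E'" "cod u = E" "i \<cdot> u = i'"
  shows "iso C u"
proof -
  note p = eq_props[OF e] and p' = eq_props[OF e']
  obtain v where v: "arr v" "dom v = E" "cod v = E'" "i' \<cdot> v = i"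
    using eq_lift[OF e', of i] p p' by auto
  have "u \<cdot> v = idt E"
    by (rule eq_mono[OF e]) (use u v p in \<open>auto simp: tail2[OF u(4)]\<close>)
  moreover have "v \<cdot> u = idt E'"
    by (rule eq_mono[OF e']) (use u v p' in \<open>auto simp: tail2[OF v(4)]\<close>)
  ultimately show ?thesis using u v by (intro isoI[where g=v]) auto
qed

lemma eq_iso_pre:
  assumes e: "is_equalizer C f g E i" and "iso C h" "cod h = E"
  shows "is_equalizer C f g (dom h) (i \<cdot> h)"
proof -
  note p = eq_props[OF e]
  show ?thesis unfolding is_equalizer_def
  proof (intro conjI ballI impI)
    show "f \<cdot> (i \<cdot> h) = g \<cdot> (i \<cdot> h)" using assms p by (simp add: tail2[OF p(8)])
  next
    fix Z k assume Z: "Z \<in> Obj C" "k \<in> hom C Z (dom f)" "f \<cdot> k = g \<cdot> k"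
    then obtain u where u: "arr u" "dom u = Z" "cod u = E" "i \<cdot> u = k"
      using eq_lift[OF e, of k] by auto
    show "\<exists>!w. w \<in> hom C Z (dom h) \<and> (i \<cdot> h) \<cdot> w = k"
    proof (rule ex1I[where a="inv h \<cdot> u"])
      show "inv h \<cdot> u \<in> hom C Z (dom h) \<and> (i \<cdot> h) \<cdot> (inv h \<cdot> u) = k" using u assms p by auto
    next
      fix w assume w: "w \<in> hom C Z (dom h) \<and> (i \<cdot> h) \<cdot> w = k"
      have "h \<cdot> w = u" by (rule eq_mono[OF e]) (use w u assms p in auto)
      thus "w = inv h \<cdot> u" using w assms by auto
    qed
  qed (use assms p in auto)
qed

end


locale lph =
  fixes C :: "('o, 'm) mcat" and T :: "('o, 'm) bimonad_data"
  assumes lph: "left_pre_hopf C T"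

lemma (in lph) cat_C: "category C"
  using lph unfolding left_pre_hopf_def bimonad_def strict_monoidal_def by blast

sublocale lph \<subseteq> cat C by (rule cat.intro, rule cat_C)

context lph
begin

abbreviation tns' (infixr "\<odot>" 70) where "a \<odot> b \<equiv> tns C a b"
abbreviation tnm' (infixr "\<otimes>" 70) where "f \<otimes> g \<equiv> tnm C f g"
abbreviation u1 where "u1 \<equiv> unt C"
abbreviation To where "To \<equiv> TO T"
abbreviation Tm where "Tm \<equiv> TM T"
abbreviation mu' ("\<mu>") where "\<mu> \<equiv> mu T"
abbreviation eta' ("\<eta>") where "\<eta> \<equiv> eta T"
abbreviation Tt where "Tt \<equiv> T2 T"
abbreviation Tz where "Tz \<equiv> T0 T"
abbreviation A where "A \<equiv> To u1"

lemma bim: "bimonad C T" using lph unfolding left_pre_hopf_def by blast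
lemma sm: "strict_monoidal C" using bim unfolding bimonad_def by blast
lemma fT: "functor C C To Tm" using bim unfolding bimonad_def by blast

lemma obj_u1[simp]: "obj u1" using sm unfolding strict_monoidal_def by blast
lemma obj_tns[simp]: "obj a \<Longrightarrow> obj b \<Longrightarrow> obj (a \<odot> b)" using sm unfolding strict_monoidal_def by blast
lemma tnm_hom: "arr f \<Longrightarrow> arr g \<Longrightarrow> f \<otimes> g \<in> hom C (dom f \<odot> dom g) (cod f \<odot> cod g)"
  using sm unfolding strict_monoidal_def by blast
lemma arr_tnm[simp]: "arr f \<Longrightarrow> arr g \<Longrightarrow> arr (f \<otimes> g)"
  and dom_tnm[simp]: "arr f \<Longrightarrow> arr g \<Longrightarrow> dom (f \<otimes> g) = dom f \<odot> dom g"
  and cod_tnm[simp]: "arr f \<Longrightarrow> arr g \<Longrightarrow> cod (f \<otimes> g) = cod f \<odot> cod g"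
  using tnm_hom by auto
lemma tnm_idt[simp]: "obj a \<Longrightarrow> obj b \<Longrightarrow> idt a \<otimes> idt b = idt (a \<odot> b)"
  using sm unfolding strict_monoidal_def by blast
lemma interchange: "arr f \<Longrightarrow> arr f' \<Longrightarrow> arr g \<Longrightarrow> arr g' \<Longrightarrow> dom f' = cod f \<Longrightarrow> dom g' = cod g \<Longrightarrow>
   (f' \<cdot> f) \<otimes> (g' \<cdot> g) = (f' \<otimes> g') \<cdot> (f \<otimes> g)"
  using sm unfolding strict_monoidal_def by metis
lemma tns_assoc[simp]: "obj a \<Longrightarrow> obj b \<Longrightarrow> obj c \<Longrightarrow> (a \<odot> b) \<odot> c = a \<odot> (b \<odot> c)"
  using sm unfolding strict_monoidal_def by blast
lemma tnm_assoc[simp]: "arr f \<Longrightarrow> arr g \<Longrightarrow> arr h \<Longrightarrow> (f \<otimes> g) \<otimes> h = f \<otimes> (g \<otimes> h)"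
  using sm unfolding strict_monoidal_def by blast
lemma tns_unit[simp]: "obj a \<Longrightarrow> u1 \<odot> a = a" "obj a \<Longrightarrow> a \<odot> u1 = a"
  using sm unfolding strict_monoidal_def by blast+
lemma tnm_unit[simp]: "arr f \<Longrightarrow> idt u1 \<otimes> f = f" "arr f \<Longrightarrow> f \<otimes> idt u1 = f"
  using sm unfolding strict_monoidal_def by blast+

lemma obj_To[simp]: "obj a \<Longrightarrow> obj (To a)" using fT unfolding functor_def by blast
lemma Tm_hom: "arr f \<Longrightarrow> Tm f \<in> hom C (To (dom f)) (To (cod f))" using fT unfolding functor_def by blast
lemma arr_Tm[simp]: "arr f \<Longrightarrow> arr (Tm f)" and dom_Tm[simp]: "arr f \<Longrightarrow> dom (Tm f) = To (dom f)"
  and cod_Tm[simp]: "arr f \<Longrightarrow> cod (Tm f) = To (cod f)" using Tm_hom by auto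
lemma Tm_idt[simp]: "obj a \<Longrightarrow> Tm (idt a) = idt (To a)" using fT unfolding functor_def by blast
lemma Tm_comp[simp]: "arr f \<Longrightarrow> arr g \<Longrightarrow> dom g = cod f \<Longrightarrow> Tm (g \<cdot> f) = Tm g \<cdot> Tm f"
  using fT unfolding functor_def by auto

lemma mu_eta_hom: "obj X \<Longrightarrow> \<mu> X \<in> hom C (To (To X)) (To X) \<and> \<eta> X \<in> hom C X (To X)"
  using bim unfolding bimonad_def by blast
lemma arr_mu[simp]: "obj X \<Longrightarrow> arr (\<mu> X)" and dom_mu[simp]: "obj X \<Longrightarrow> dom (\<mu> X) = To (To X)"
  and cod_mu[simp]: "obj X \<Longrightarrow> cod (\<mu> X) = To X"
  and arr_eta[simp]: "obj X \<Longrightarrow> arr (\<eta> X)" and dom_eta[simp]: "obj X \<Longrightarrow> dom (\<eta> X) = X"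
  and cod_eta[simp]: "obj X \<Longrightarrow> cod (\<eta> X) = To X"
  using mu_eta_hom by auto

lemma Tt_hom: "obj X \<Longrightarrow> obj Y \<Longrightarrow> Tt X Y \<in> hom C (To (X \<odot> Y)) (To X \<odot> To Y)"
  using bim unfolding bimonad_def by blast
lemma arr_Tt[simp]: "obj X \<Longrightarrow> obj Y \<Longrightarrow> arr (Tt X Y)"
  and dom_Tt[simp]: "obj X \<Longrightarrow> obj Y \<Longrightarrow> dom (Tt X Y) = To (X \<odot> Y)"
  and cod_Tt[simp]: "obj X \<Longrightarrow> obj Y \<Longrightarrow> cod (Tt X Y) = To X \<odot> To Y"
  using Tt_hom by auto
lemma Tz_hom: "Tz \<in> hom C A u1" using bim unfolding bimonad_def by blast
lemma arr_Tz[simp]: "arr Tz" and dom_Tz[simp]: "dom Tz = A" and cod_Tz[simp]: "cod Tz = u1"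
  using Tz_hom by auto

lemma mu_nat: "arr f \<Longrightarrow> \<mu> (cod f) \<cdot> Tm (Tm f) = Tm f \<cdot> \<mu> (dom f)"
  using bim unfolding bimonad_def by blast
lemma eta_nat: "arr f \<Longrightarrow> \<eta> (cod f) \<cdot> f = Tm f \<cdot> \<eta> (dom f)"
  using bim unfolding bimonad_def by blast
lemma mu_assoc: "obj X \<Longrightarrow> \<mu> X \<cdot> Tm (\<mu> X) = \<mu> X \<cdot> \<mu> (To X)"
  using bim unfolding bimonad_def by blast
lemma mu_eta1[simp]: "obj X \<Longrightarrow> \<mu> X \<cdot> \<eta> (To X) = idt (To X)"
  using bim unfolding bimonad_def by blast
lemma mu_eta2[simp]: "obj X \<Longrightarrow> \<mu> X \<cdot> Tm (\<eta> X) = idt (To X)"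
  using bim unfolding bimonad_def by blast
lemma Tt_nat: "arr f \<Longrightarrow> arr g \<Longrightarrow> Tt (cod f) (cod g) \<cdot> Tm (f \<otimes> g) = (Tm f \<otimes> Tm g) \<cdot> Tt (dom f) (dom g)"
  using bim unfolding bimonad_def by blast
lemma Tt_coassoc: "obj X \<Longrightarrow> obj Y \<Longrightarrow> obj Z \<Longrightarrow>
   (Tt X Y \<otimes> idt (To Z)) \<cdot> Tt (X \<odot> Y) Z = (idt (To X) \<otimes> Tt Y Z) \<cdot> Tt X (Y \<odot> Z)"
  using bim unfolding bimonad_def by blast
lemma Tt_counit: "obj X \<Longrightarrow> (Tz \<otimes> idt (To X)) \<cdot> Tt u1 X = idt (To X)"
   "obj X \<Longrightarrow> (idt (To X) \<otimes> Tz) \<cdot> Tt X u1 = idt (To X)"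
  using bim unfolding bimonad_def by blast+
lemma mu_comon: "obj X \<Longrightarrow> obj Y \<Longrightarrow>
   Tt X Y \<cdot> \<mu> (X \<odot> Y) = (\<mu> X \<otimes> \<mu> Y) \<cdot> (Tt (To X) (To Y) \<cdot> Tm (Tt X Y))"
  using bim unfolding bimonad_def by blast
lemma eta_comon: "obj X \<Longrightarrow> obj Y \<Longrightarrow> Tt X Y \<cdot> \<eta> (X \<odot> Y) = \<eta> X \<otimes> \<eta> Y"
  using bim unfolding bimonad_def by blast

definition H where "H X = (idt A \<otimes> \<mu> X) \<cdot> Tt u1 (To X)"
lemma H_iso: "obj X \<Longrightarrow> iso C (H X)"
  using lph unfolding left_pre_hopf_def H_def by blast
lemma arr_H[simp]: "obj X \<Longrightarrow> arr (H X)" and dom_H[simp]: "obj X \<Longrightarrow> dom (H X) = To (To X)"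
  and cod_H[simp]: "obj X \<Longrightarrow> cod (H X) = A \<odot> To X"
  by (simp_all add: H_def)
definition Hi where "Hi X = inv (H X)"
lemma arr_Hi[simp]: "obj X \<Longrightarrow> arr (Hi X)" and dom_Hi[simp]: "obj X \<Longrightarrow> dom (Hi X) = A \<odot> To X"
  and cod_Hi[simp]: "obj X \<Longrightarrow> cod (Hi X) = To (To X)"
  and H_Hi[simp]: "obj X \<Longrightarrow> H X \<cdot> Hi X = idt (A \<odot> To X)"
  and Hi_H[simp]: "obj X \<Longrightarrow> Hi X \<cdot> H X = idt (To (To X))"
  using H_iso by (simp_all add: Hi_def)

lemma tnm_idt2[simp]: "obj a \<Longrightarrow> obj b \<Longrightarrow> arr f \<Longrightarrow> idt a \<otimes> (idt b \<otimes> f) = idt (a \<odot> b) \<otimes> f"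
  by (metis arr_idt tnm_assoc tnm_idt)

lemma merge: "arr f \<Longrightarrow> arr f' \<Longrightarrow> arr g \<Longrightarrow> arr g' \<Longrightarrow> dom f' = cod f \<Longrightarrow> dom g' = cod g \<Longrightarrow>
   (f' \<otimes> g') \<cdot> (f \<otimes> g) = (f' \<cdot> f) \<otimes> (g' \<cdot> g)"
  by (simp add: interchange)
lemma merge_t: "arr f \<Longrightarrow> arr f' \<Longrightarrow> arr g \<Longrightarrow> arr g' \<Longrightarrow> dom f' = cod f \<Longrightarrow> dom g' = cod g \<Longrightarrow>
   arr x \<Longrightarrow> cod x = dom f \<odot> dom g \<Longrightarrow>
   (f' \<otimes> g') \<cdot> ((f \<otimes> g) \<cdot> x) = ((f' \<cdot> f) \<otimes> (g' \<cdot> g)) \<cdot> x"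
  by (simp add: interchange)

lemma Tt_nat': "arr f \<Longrightarrow> arr g \<Longrightarrow> cod f = X \<Longrightarrow> cod g = Y \<Longrightarrow>
   Tt X Y \<cdot> Tm (f \<otimes> g) = (Tm f \<otimes> Tm g) \<cdot> Tt (dom f) (dom g)"
  using Tt_nat by blast
lemma Tt_nat1: "arr g \<Longrightarrow> cod g = Y \<Longrightarrow> Tt u1 Y \<cdot> Tm g = (idt A \<otimes> Tm g) \<cdot> Tt u1 (dom g)"
  using Tt_nat[of "idt u1" g] by simp
lemma mu_nat': "arr f \<Longrightarrow> cod f = Y \<Longrightarrow> \<mu> Y \<cdot> Tm (Tm f) = Tm f \<cdot> \<mu> (dom f)"
  using mu_nat by blast
lemma eta_nat': "arr f \<Longrightarrow> cod f = Y \<Longrightarrow> \<eta> Y \<cdot> f = Tm f \<cdot> \<eta> (dom f)"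
  using eta_nat by blast

lemma H_nat: "arr f \<Longrightarrow> cod f = Y \<Longrightarrow> H Y \<cdot> Tm (Tm f) = (idt A \<otimes> Tm f) \<cdot> H (dom f)"
proof -
  assume f0: "arr f" "cod f = Y"
  hence f: "arr f" "cod f = Y" "obj Y" by auto
  have "H Y \<cdot> Tm (Tm f) = (idt A \<otimes> \<mu> Y) \<cdot> (Tt u1 (To Y) \<cdot> Tm (Tm f))" using f by (simp add: H_def)
  also have "\<dots> = (idt A \<otimes> \<mu> Y) \<cdot> ((idt A \<otimes> Tm (Tm f)) \<cdot> Tt u1 (To (dom f)))"
    using f by (simp add: Tt_nat1)
  also have "\<dots> = (idt A \<otimes> (\<mu> Y \<cdot> Tm (Tm f))) \<cdot> Tt u1 (To (dom f))"
    using f by (simp add: merge_t)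
  also have "\<dots> = (idt A \<otimes> (Tm f \<cdot> \<mu> (dom f))) \<cdot> Tt u1 (To (dom f))"
    using f by (simp add: mu_nat')
  also have "\<dots> = (idt A \<otimes> Tm f) \<cdot> H (dom f)"
    using f by (simp add: H_def merge_t)
  finally show ?thesis .
qed

lemma Hi_H_t[simp]: "obj X \<Longrightarrow> arr x \<Longrightarrow> cod x = To (To X) \<Longrightarrow> Hi X \<cdot> (H X \<cdot> x) = x"
  and H_Hi_t[simp]: "obj X \<Longrightarrow> arr x \<Longrightarrow> cod x = A \<odot> To X \<Longrightarrow> H X \<cdot> (Hi X \<cdot> x) = x"
  by (simp_all add: tail2[OF Hi_H] tail2[OF H_Hi])

lemma Hi_nat: "arr f \<Longrightarrow> cod f = Y \<Longrightarrow> Hi Y \<cdot> (idt A \<otimes> Tm f) = Tm (Tm f) \<cdot> Hi (dom f)"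
proof -
  assume f0: "arr f" "cod f = Y"
  hence f: "arr f" "cod f = Y" "obj Y" by auto
  have e1: "Hi Y \<cdot> ((idt A \<otimes> Tm f) \<cdot> H (dom f)) = Tm (Tm f)"
    using f by (simp add: H_nat[OF f0, symmetric])
  have e2: "(Hi Y \<cdot> (idt A \<otimes> Tm f)) \<cdot> H (dom f) = (Tm (Tm f) \<cdot> Hi (dom f)) \<cdot> H (dom f)"
    using f e1 by simp
  show ?thesis by (rule iso_cancel_right[OF H_iso[of "dom f"] _ _ _ _ e2]) (use f in auto)
qed

lemma H_eta: "obj X \<Longrightarrow> H X \<cdot> Tm (\<eta> X) = Tt u1 X"
proof -
  assume X: "obj X"
  have "H X \<cdot> Tm (\<eta> X) = (idt A \<otimes> \<mu> X) \<cdot> (Tt u1 (To X) \<cdot> Tm (\<eta> X))" using X by (simp add: H_def)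
  also have "\<dots> = (idt A \<otimes> \<mu> X) \<cdot> ((idt A \<otimes> Tm (\<eta> X)) \<cdot> Tt u1 X)"
    using X by (simp add: Tt_nat1)
  also have "\<dots> = Tt u1 X" using X by (simp add: merge_t)
  finally show ?thesis .
qed

lemma Hi_Tt: "obj X \<Longrightarrow> Hi X \<cdot> Tt u1 X = Tm (\<eta> X)"
proof -
  assume X: "obj X"
  have "Hi X \<cdot> Tt u1 X = Hi X \<cdot> (H X \<cdot> Tm (\<eta> X))" using X by (simp add: H_eta)
  also have "\<dots> = Tm (\<eta> X)" using X by (simp add: tail2[OF Hi_H])
  finally show ?thesis .
qed

lemma H_mu: "obj N \<Longrightarrow> H N \<cdot> Tm (\<mu> N) = (idt A \<otimes> \<mu> N) \<cdot> H (To N)"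
proof -
  assume X: "obj N"
  have "H N \<cdot> Tm (\<mu> N) = (idt A \<otimes> \<mu> N) \<cdot> (Tt u1 (To N) \<cdot> Tm (\<mu> N))" using X by (simp add: H_def)
  also have "\<dots> = (idt A \<otimes> \<mu> N) \<cdot> ((idt A \<otimes> Tm (\<mu> N)) \<cdot> Tt u1 (To (To N)))"
    using X by (simp add: Tt_nat1)
  also have "\<dots> = (idt A \<otimes> (\<mu> N \<cdot> Tm (\<mu> N))) \<cdot> Tt u1 (To (To N))"
    using X by (simp add: merge_t)
  also have "\<dots> = (idt A \<otimes> (\<mu> N \<cdot> \<mu> (To N))) \<cdot> Tt u1 (To (To N))"
    using X by (simp add: mu_assoc)
  also have "\<dots> = (idt A \<otimes> \<mu> N) \<cdot> H (To N)"
    using X by (simp add: H_def merge_t)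
  finally show ?thesis .
qed

lemma claimC: "obj N \<Longrightarrow> Tm (\<mu> N) \<cdot> (Hi (To N) \<cdot> ((idt A \<otimes> \<eta> (To N)) \<cdot> Tt u1 N)) = Tm (\<eta> N)"
proof -
  assume X: "obj N"
  have "H N \<cdot> (Tm (\<mu> N) \<cdot> (Hi (To N) \<cdot> ((idt A \<otimes> \<eta> (To N)) \<cdot> Tt u1 N)))
      = (idt A \<otimes> \<mu> N) \<cdot> (H (To N) \<cdot> (Hi (To N) \<cdot> ((idt A \<otimes> \<eta> (To N)) \<cdot> Tt u1 N)))"
    using X by (simp add: tail2[OF H_mu])
  also have "\<dots> = (idt A \<otimes> \<mu> N) \<cdot> ((idt A \<otimes> \<eta> (To N)) \<cdot> Tt u1 N)"
    using X by (simp add: tail2[OF H_Hi])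
  also have "\<dots> = Tt u1 N" using X by (simp add: merge_t)
  also have "\<dots> = H N \<cdot> Tm (\<eta> N)" using X by (simp add: H_eta)
  finally have e: "H N \<cdot> (Tm (\<mu> N) \<cdot> (Hi (To N) \<cdot> ((idt A \<otimes> \<eta> (To N)) \<cdot> Tt u1 N))) = H N \<cdot> Tm (\<eta> N)" .
  show ?thesis by (rule iso_cancel_left[OF H_iso[of N] _ _ _ _ e]) (use X in auto)
qed


lemma Tm_pair: "arr f \<Longrightarrow> arr g \<Longrightarrow> arr f' \<Longrightarrow> arr g' \<Longrightarrow> dom g = cod f \<Longrightarrow> dom g' = cod f' \<Longrightarrow>
  g \<cdot> f = g' \<cdot> f' \<Longrightarrow> Tm g \<cdot> Tm f = Tm g' \<cdot> Tm f'"
  by (metis Tm_comp)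

section \<open>Modules and the operator K\<close>

lemma tmodD: "t_module C T N r \<Longrightarrow> obj N \<and> arr r \<and> dom r = To N \<and> cod r = N \<and>
   r \<cdot> Tm r = r \<cdot> \<mu> N \<and> r \<cdot> \<eta> N = idt N"
  unfolding t_module_def by auto

definition K where "K N r = (idt A \<otimes> r) \<cdot> Tt u1 N"
definition Ki where "Ki N r = Tm r \<cdot> (Hi N \<cdot> (idt A \<otimes> \<eta> N))"

lemma K_typ: "obj N \<Longrightarrow> arr r \<Longrightarrow> dom r = To N \<Longrightarrow> cod r = N \<Longrightarrow>
   arr (K N r) \<and> dom (K N r) = To N \<and> cod (K N r) = A \<odot> N"
  by (simp add: K_def)
lemma Ki_typ: "obj N \<Longrightarrow> arr r \<Longrightarrow> dom r = To N \<Longrightarrow> cod r = N \<Longrightarrow>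
   arr (Ki N r) \<and> dom (Ki N r) = A \<odot> N \<and> cod (Ki N r) = To N"
  by (simp add: Ki_def)

lemma K_Ki: assumes m0: "t_module C T N r" shows "K N r \<cdot> Ki N r = idt (A \<odot> N)"
proof -
  note m = tmodD[OF m0]
  have "K N r \<cdot> Ki N r = (idt A \<otimes> r) \<cdot> (Tt u1 N \<cdot> (Tm r \<cdot> (Hi N \<cdot> (idt A \<otimes> \<eta> N))))"
    using m by (simp add: K_def Ki_def)
  also have "\<dots> = (idt A \<otimes> r) \<cdot> ((idt A \<otimes> Tm r) \<cdot> (Tt u1 (To N) \<cdot> (Hi N \<cdot> (idt A \<otimes> \<eta> N))))"
    using m by (simp add: tail2[OF Tt_nat1])
  also have "\<dots> = (idt A \<otimes> (r \<cdot> Tm r)) \<cdot> (Tt u1 (To N) \<cdot> (Hi N \<cdot> (idt A \<otimes> \<eta> N)))"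
    using m by (simp add: merge_t)
  also have "\<dots> = (idt A \<otimes> (r \<cdot> \<mu> N)) \<cdot> (Tt u1 (To N) \<cdot> (Hi N \<cdot> (idt A \<otimes> \<eta> N)))"
    using m by simp
  also have "\<dots> = (idt A \<otimes> r) \<cdot> (H N \<cdot> (Hi N \<cdot> (idt A \<otimes> \<eta> N)))"
    using m by (simp add: H_def merge_t)
  also have "\<dots> = (idt A \<otimes> r) \<cdot> (idt A \<otimes> \<eta> N)"
    using m by simp
  also have "\<dots> = idt (A \<odot> N)"
    using m by (simp add: merge)
  finally show ?thesis .
qed

lemma Ki_K: assumes m0: "t_module C T N r" shows "Ki N r \<cdot> K N r = idt (To N)"
proof -
  note m = tmodD[OF m0]
  have "Ki N r \<cdot> K N r = Tm r \<cdot> (Hi N \<cdot> (((idt A \<otimes> \<eta> N) \<cdot> (idt A \<otimes> r)) \<cdot> Tt u1 N))"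
    using m by (simp add: K_def Ki_def)
  also have "\<dots> = Tm r \<cdot> (Hi N \<cdot> ((idt A \<otimes> (\<eta> N \<cdot> r)) \<cdot> Tt u1 N))"
    using m by (simp add: merge)
  also have "\<dots> = Tm r \<cdot> (Hi N \<cdot> ((idt A \<otimes> (Tm r \<cdot> \<eta> (To N))) \<cdot> Tt u1 N))"
    using m by (simp add: eta_nat')
  also have "\<dots> = Tm r \<cdot> (Hi N \<cdot> ((idt A \<otimes> Tm r) \<cdot> ((idt A \<otimes> \<eta> (To N)) \<cdot> Tt u1 N)))"
    using m by (simp add: merge_t)
  also have "\<dots> = Tm r \<cdot> (Tm (Tm r) \<cdot> (Hi (To N) \<cdot> ((idt A \<otimes> \<eta> (To N)) \<cdot> Tt u1 N)))"
    using m by (simp add: tail2[OF Hi_nat])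
  also have "\<dots> = Tm r \<cdot> (Tm (\<mu> N) \<cdot> (Hi (To N) \<cdot> ((idt A \<otimes> \<eta> (To N)) \<cdot> Tt u1 N)))"
  proof -
    have mT: "Tm r \<cdot> Tm (Tm r) = Tm r \<cdot> Tm (\<mu> N)" by (rule Tm_pair) (use m in auto)
    show ?thesis using m by (simp add: tail2[OF mT])
  qed
  also have "\<dots> = Tm r \<cdot> Tm (\<eta> N)"
    using m by (simp add: claimC)
  also have "\<dots> = idt (To N)"
    using m by (simp del: Tm_comp add: Tm_comp[symmetric])
  finally show ?thesis .
qed


lemma left_cancel: "arr k \<Longrightarrow> arr ki \<Longrightarrow> dom ki = cod k \<Longrightarrow> ki \<cdot> k = idt (dom k) \<Longrightarrow>
   arr x \<Longrightarrow> arr y \<Longrightarrow> cod x = dom k \<Longrightarrow> cod y = dom k \<Longrightarrow> k \<cdot> x = k \<cdot> y \<Longrightarrow> x = y"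
proof -
  assume a: "arr k" "arr ki" "dom ki = cod k" "ki \<cdot> k = idt (dom k)"
    "arr x" "arr y" "cod x = dom k" "cod y = dom k" "k \<cdot> x = k \<cdot> y"
  have "ki \<cdot> (k \<cdot> x) = ki \<cdot> (k \<cdot> y)" using a by simp
  thus ?thesis using a(1-8) by (simp add: tail2[OF a(4)])
qed

section \<open>Hopf modules\<close>

lemma hopfD: "hopf_module C T (M, r, \<rho>) \<Longrightarrow> t_module C T M r \<and> obj M \<and> arr r \<and> dom r = To M \<and> cod r = M \<and>
   r \<cdot> Tm r = r \<cdot> \<mu> M \<and> r \<cdot> \<eta> M = idt M \<and> arr \<rho> \<and> dom \<rho> = M \<and> cod \<rho> = A \<odot> M \<and>
   (Tt u1 u1 \<otimes> idt M) \<cdot> \<rho> = (idt A \<otimes> \<rho>) \<cdot> \<rho> \<and> (Tz \<otimes> idt M) \<cdot> \<rho> = idt M \<and>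
   \<rho> \<cdot> r = (\<mu> u1 \<otimes> r) \<cdot> (Tt A M \<cdot> Tm \<rho>)"
  unfolding hopf_module_def t_module_def t1_comodule_def by auto

lemmas KKi_typ[simp] = K_typ Ki_typ

lemma K_Ki_t: "t_module C T N r \<Longrightarrow> arr x \<Longrightarrow> cod x = A \<odot> N \<Longrightarrow> K N r \<cdot> (Ki N r \<cdot> x) = x"
  using tmodD[of N r] by (simp add: tail2[OF K_Ki])
lemma Ki_K_t: "t_module C T N r \<Longrightarrow> arr x \<Longrightarrow> cod x = To N \<Longrightarrow> Ki N r \<cdot> (K N r \<cdot> x) = x"
  using tmodD[of N r] by (simp add: tail2[OF Ki_K])

lemma coassoc1: "obj Z \<Longrightarrow> (Tt u1 u1 \<otimes> idt (To Z)) \<cdot> Tt u1 Z = (idt A \<otimes> Tt u1 Z) \<cdot> Tt u1 Z"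
  using Tt_coassoc[of u1 u1 Z] by simp

context
  fixes M r \<rho> assumes h0: "hopf_module C T (M, r, \<rho>)"
begin

lemma h: "t_module C T M r" "obj M" "arr r" "dom r = To M" "cod r = M"
   "r \<cdot> Tm r = r \<cdot> \<mu> M" "r \<cdot> \<eta> M = idt M" "arr \<rho>" "dom \<rho> = M" "cod \<rho> = A \<odot> M"
   "(Tt u1 u1 \<otimes> idt M) \<cdot> \<rho> = (idt A \<otimes> \<rho>) \<cdot> \<rho>" "(Tz \<otimes> idt M) \<cdot> \<rho> = idt M"
   "\<rho> \<cdot> r = (\<mu> u1 \<otimes> r) \<cdot> (Tt A M \<cdot> Tm \<rho>)"
  using hopfD[OF h0] by auto

lemma K_fork: "arr k \<Longrightarrow> cod k = To M \<Longrightarrow> Tm (\<eta> u1 \<otimes> idt M) \<cdot> k = Tm \<rho> \<cdot> k \<Longrightarrow>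
  \<rho> \<cdot> (r \<cdot> k) = K M r \<cdot> k"
proof -
  assume k: "arr k" "cod k = To M" and fk: "Tm (\<eta> u1 \<otimes> idt M) \<cdot> k = Tm \<rho> \<cdot> k"
  have "\<rho> \<cdot> (r \<cdot> k) = (\<mu> u1 \<otimes> r) \<cdot> (Tt A M \<cdot> (Tm \<rho> \<cdot> k))"
    using k h by (simp add: tail2[OF h(13)])
  also have "\<dots> = (\<mu> u1 \<otimes> r) \<cdot> (Tt A M \<cdot> (Tm (\<eta> u1 \<otimes> idt M) \<cdot> k))"
    using fk by simp
  also have "\<dots> = (\<mu> u1 \<otimes> r) \<cdot> ((Tm (\<eta> u1) \<otimes> idt (To M)) \<cdot> (Tt u1 M \<cdot> k))"
    using k h by (simp add: tail2[OF Tt_nat'])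
  also have "\<dots> = K M r \<cdot> k"
    using k h by (simp add: merge_t K_def)
  finally show ?thesis .
qed

lemma rK: "(Tz \<otimes> idt M) \<cdot> K M r = r"
proof -
  have e: "r \<cdot> (Tz \<otimes> idt (To M)) = Tz \<otimes> r" using merge[of Tz "idt u1" "idt (To M)" r] h by simp
  have "(Tz \<otimes> idt M) \<cdot> K M r = (Tz \<otimes> r) \<cdot> Tt u1 M" using h by (simp add: K_def merge_t)
  also have "\<dots> = r \<cdot> ((Tz \<otimes> idt (To M)) \<cdot> Tt u1 M)" using h by (simp add: e[symmetric])
  also have "\<dots> = r" using h by (simp add: Tt_counit)
  finally show ?thesis .
qed

lemma J1: "r \<cdot> (Ki M r \<cdot> \<rho>) = idt M"
proof -
  have "r \<cdot> (Ki M r \<cdot> \<rho>) = (Tz \<otimes> idt M) \<cdot> (K M r \<cdot> (Ki M r \<cdot> \<rho>))"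
    by (rule tail2[OF rK, symmetric]) (use h in auto)
  also have "\<dots> = idt M" using h by (simp add: K_Ki_t)
  finally show ?thesis .
qed

lemma J3: "arr k \<Longrightarrow> cod k = To M \<Longrightarrow> Tm (\<eta> u1 \<otimes> idt M) \<cdot> k = Tm \<rho> \<cdot> k \<Longrightarrow>
  Ki M r \<cdot> (\<rho> \<cdot> (r \<cdot> k)) = k"
proof -
  assume k: "arr k" "cod k = To M" "Tm (\<eta> u1 \<otimes> idt M) \<cdot> k = Tm \<rho> \<cdot> k"
  have "Ki M r \<cdot> (\<rho> \<cdot> (r \<cdot> k)) = Ki M r \<cdot> (K M r \<cdot> k)" using K_fork[OF k] by simp
  also have "\<dots> = k" using k h by (simp add: Ki_K_t)
  finally show ?thesis .
qed

definition r2 where "r2 = (\<mu> u1 \<otimes> r) \<cdot> Tt A M"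

lemma r2_typ[simp]: "arr r2" "dom r2 = To (A \<odot> M)" "cod r2 = A \<odot> M"
  using h by (simp_all add: r2_def)

lemma tmod2: "t_module C T (A \<odot> M) r2"
proof -
  have u: "r2 \<cdot> \<eta> (A \<odot> M) = idt (A \<odot> M)"
  proof -
    have "r2 \<cdot> \<eta> (A \<odot> M) = (\<mu> u1 \<otimes> r) \<cdot> (\<eta> A \<otimes> \<eta> M)"
      using h by (simp add: r2_def eta_comon)
    also have "\<dots> = idt (A \<odot> M)" using h by (simp add: merge)
    finally show ?thesis .
  qed
  have a: "r2 \<cdot> Tm r2 = r2 \<cdot> \<mu> (A \<odot> M)"
  proof -
    have "r2 \<cdot> Tm r2 = (\<mu> u1 \<otimes> r) \<cdot> (Tt A M \<cdot> (Tm (\<mu> u1 \<otimes> r) \<cdot> Tm (Tt A M)))"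
      using h by (simp add: r2_def)
    also have "\<dots> = (\<mu> u1 \<otimes> r) \<cdot> ((Tm (\<mu> u1) \<otimes> Tm r) \<cdot> (Tt (To A) (To M) \<cdot> Tm (Tt A M)))"
      using h by (simp add: tail2[OF Tt_nat'])
    also have "\<dots> = ((\<mu> u1 \<cdot> Tm (\<mu> u1)) \<otimes> (r \<cdot> Tm r)) \<cdot> (Tt (To A) (To M) \<cdot> Tm (Tt A M))"
      using h by (simp add: merge_t del: h(6))
    also have "\<dots> = ((\<mu> u1 \<cdot> \<mu> A) \<otimes> (r \<cdot> \<mu> M)) \<cdot> (Tt (To A) (To M) \<cdot> Tm (Tt A M))"
      using h by (simp add: mu_assoc)
    also have "\<dots> = (\<mu> u1 \<otimes> r) \<cdot> ((\<mu> A \<otimes> \<mu> M) \<cdot> (Tt (To A) (To M) \<cdot> Tm (Tt A M)))"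
      using h by (simp add: merge_t)
    also have "\<dots> = (\<mu> u1 \<otimes> r) \<cdot> (Tt A M \<cdot> \<mu> (A \<odot> M))"
      using h by (simp add: mu_comon)
    also have "\<dots> = r2 \<cdot> \<mu> (A \<odot> M)" using h by (simp add: r2_def)
    finally show ?thesis .
  qed
  show ?thesis unfolding t_module_def using u a h by simp
qed

lemma K2a: "K (A \<odot> M) r2 \<cdot> Tm \<rho> = (idt A \<otimes> \<rho>) \<cdot> K M r"
proof -
  have "K (A \<odot> M) r2 \<cdot> Tm \<rho> = (idt A \<otimes> r2) \<cdot> ((idt A \<otimes> Tm \<rho>) \<cdot> Tt u1 M)"
    using h by (simp add: K_def Tt_nat1)
  also have "\<dots> = (idt A \<otimes> (r2 \<cdot> Tm \<rho>)) \<cdot> Tt u1 M"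
    using h by (simp add: merge_t)
  also have "\<dots> = (idt A \<otimes> (\<rho> \<cdot> r)) \<cdot> Tt u1 M"
    using h by (simp add: r2_def)
  also have "\<dots> = (idt A \<otimes> \<rho>) \<cdot> K M r"
    using h by (simp add: K_def merge_t del: h(13))
  finally show ?thesis .
qed

lemma r2_eta: "r2 \<cdot> Tm (\<eta> u1 \<otimes> idt M) = K M r"
proof -
  have "r2 \<cdot> Tm (\<eta> u1 \<otimes> idt M) = (\<mu> u1 \<otimes> r) \<cdot> ((Tm (\<eta> u1) \<otimes> idt (To M)) \<cdot> Tt u1 M)"
    using h by (simp add: r2_def Tt_nat')
  also have "\<dots> = K M r" using h by (simp add: merge_t K_def)
  finally show ?thesis .
qed

lemma K2b: "K (A \<odot> M) r2 \<cdot> Tm (\<eta> u1 \<otimes> idt M) = (Tt u1 u1 \<otimes> idt M) \<cdot> K M r"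
proof -
  have "K (A \<odot> M) r2 \<cdot> Tm (\<eta> u1 \<otimes> idt M) = (idt A \<otimes> r2) \<cdot> ((idt A \<otimes> Tm (\<eta> u1 \<otimes> idt M)) \<cdot> Tt u1 M)"
    using h by (simp add: K_def Tt_nat1)
  also have "\<dots> = (idt A \<otimes> (r2 \<cdot> Tm (\<eta> u1 \<otimes> idt M))) \<cdot> Tt u1 M"
    using h by (simp add: merge_t)
  also have "\<dots> = (idt A \<otimes> ((idt A \<otimes> r) \<cdot> Tt u1 M)) \<cdot> Tt u1 M"
    using h by (simp add: r2_eta K_def)
  also have "\<dots> = (idt A \<otimes> (idt A \<otimes> r)) \<cdot> ((idt A \<otimes> Tt u1 M) \<cdot> Tt u1 M)"
    using h by (simp del: tnm_idt2 add: merge_t)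
  also have "\<dots> = (idt (A \<odot> A) \<otimes> r) \<cdot> ((Tt u1 u1 \<otimes> idt (To M)) \<cdot> Tt u1 M)"
    using h by (simp add: coassoc1)
  also have "\<dots> = (Tt u1 u1 \<otimes> idt M) \<cdot> K M r"
    using h by (simp add: merge_t K_def)
  finally show ?thesis .
qed

lemma K_j: "K M r \<cdot> (Ki M r \<cdot> \<rho>) = \<rho>" using h by (simp add: K_Ki_t)

lemma J2: "Tm \<rho> \<cdot> (Ki M r \<cdot> \<rho>) = Tm (\<eta> u1 \<otimes> idt M) \<cdot> (Ki M r \<cdot> \<rho>)"
proof (rule left_cancel[where k="K (A \<odot> M) r2" and ki="Ki (A \<odot> M) r2"])
  have "K (A \<odot> M) r2 \<cdot> (Tm \<rho> \<cdot> (Ki M r \<cdot> \<rho>)) = (idt A \<otimes> \<rho>) \<cdot> (K M r \<cdot> (Ki M r \<cdot> \<rho>))"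
    using h by (simp add: tail2[OF K2a])
  also have "\<dots> = (idt A \<otimes> \<rho>) \<cdot> \<rho>" by (simp add: K_j)
  also have "\<dots> = (Tt u1 u1 \<otimes> idt M) \<cdot> \<rho>" using h by simp
  also have "\<dots> = (Tt u1 u1 \<otimes> idt M) \<cdot> (K M r \<cdot> (Ki M r \<cdot> \<rho>))" by (simp add: K_j)
  also have "\<dots> = K (A \<odot> M) r2 \<cdot> (Tm (\<eta> u1 \<otimes> idt M) \<cdot> (Ki M r \<cdot> \<rho>))"
    using h by (simp add: tail2[OF K2b])
  finally show "K (A \<odot> M) r2 \<cdot> (Tm \<rho> \<cdot> (Ki M r \<cdot> \<rho>)) = K (A \<odot> M) r2 \<cdot> (Tm (\<eta> u1 \<otimes> idt M) \<cdot> (Ki M r \<cdot> \<rho>))" .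
qed (use h tmod2 Ki_K in auto)

lemma j_equalizer: "is_equalizer C (Tm (\<eta> u1 \<otimes> idt M)) (Tm \<rho>) M (Ki M r \<cdot> \<rho>)"
  unfolding is_equalizer_def
proof (intro conjI ballI impI)
  show "Tm (\<eta> u1 \<otimes> idt M) \<cdot> (Ki M r \<cdot> \<rho>) = Tm \<rho> \<cdot> (Ki M r \<cdot> \<rho>)" using J2 by simp
next
  fix Z k assume Z: "Z \<in> Obj C" "k \<in> hom C Z (dom (Tm (\<eta> u1 \<otimes> idt M)))"
    "Tm (\<eta> u1 \<otimes> idt M) \<cdot> k = Tm \<rho> \<cdot> k"
  have k: "arr k" "dom k = Z" "cod k = To M" using Z h by auto
  show "\<exists>!u. u \<in> hom C Z M \<and> (Ki M r \<cdot> \<rho>) \<cdot> u = k"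
  proof (rule ex1I[where a="r \<cdot> k"])
    show "r \<cdot> k \<in> hom C Z M \<and> (Ki M r \<cdot> \<rho>) \<cdot> (r \<cdot> k) = k"
      using J3[OF k(1,3) Z(3)] k h by simp
  next
    fix u assume u: "u \<in> hom C Z M \<and> (Ki M r \<cdot> \<rho>) \<cdot> u = k"
    have ua: "arr u" "cod u = M" and ue: "(Ki M r \<cdot> \<rho>) \<cdot> u = k" using u by auto
    have "u = r \<cdot> ((Ki M r \<cdot> \<rho>) \<cdot> u)" using ua h by (simp add: tail3[OF J1])
    also have "\<dots> = r \<cdot> k" using ue by simp
    finally show "u = r \<cdot> k" .
  qed
qed (use h in auto)

end


section \<open>The category HM and the functor h\<close>

lemma hmor_iff: "hopf_morphism C T (M, r, \<rho>) (N, s, \<sigma>) f \<longleftrightarrow>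
   arr f \<and> dom f = M \<and> cod f = N \<and> f \<cdot> r = s \<cdot> Tm f \<and> (idt A \<otimes> f) \<cdot> \<rho> = \<sigma> \<cdot> f"
  by (auto simp: hopf_morphism_def)

lemma HM_simps: "Obj (HM C T) = {MM. hopf_module C T MM}"
  "Arr (HM C T) = {(MM, NN, f). hopf_module C T MM \<and> hopf_module C T NN \<and> hopf_morphism C T MM NN f}"
  "Src (HM C T) F = fst F" "Tgt (HM C T) F = fst (snd F)" "Idt (HM C T) MM = (MM, MM, idt (fst MM))"
  "Cmp (HM C T) G F = (fst F, fst (snd G), snd (snd G) \<cdot> snd (snd F))"
  by (simp_all add: HM_def)

lemma hmor_id: "hopf_module C T (M, r, \<rho>) \<Longrightarrow> hopf_morphism C T (M, r, \<rho>) (M, r, \<rho>) (idt M)"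
  using hopfD[of M r \<rho>] by (simp add: hmor_iff)

lemma hmor_comp: "hopf_module C T (M, r, \<rho>) \<Longrightarrow> hopf_module C T (N, s, \<sigma>) \<Longrightarrow> hopf_module C T (P, t, \<tau>) \<Longrightarrow>
  hopf_morphism C T (M, r, \<rho>) (N, s, \<sigma>) f \<Longrightarrow> hopf_morphism C T (N, s, \<sigma>) (P, t, \<tau>) g \<Longrightarrow>
  hopf_morphism C T (M, r, \<rho>) (P, t, \<tau>) (g \<cdot> f)"
proof -
  assume hM: "hopf_module C T (M, r, \<rho>)" and hN: "hopf_module C T (N, s, \<sigma>)"
    and hP: "hopf_module C T (P, t, \<tau>)"
    and f: "hopf_morphism C T (M, r, \<rho>) (N, s, \<sigma>) f" and g: "hopf_morphism C T (N, s, \<sigma>) (P, t, \<tau>) g"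
  note a = hopfD[OF hM] hopfD[OF hN] hopfD[OF hP]
  have f': "arr f" "dom f = M" "cod f = N" "f \<cdot> r = s \<cdot> Tm f" "(idt A \<otimes> f) \<cdot> \<rho> = \<sigma> \<cdot> f"
    using f by (auto simp: hmor_iff)
  have g': "arr g" "dom g = N" "cod g = P" "g \<cdot> s = t \<cdot> Tm g" "(idt A \<otimes> g) \<cdot> \<sigma> = \<tau> \<cdot> g"
    using g by (auto simp: hmor_iff)
  have m: "(g \<cdot> f) \<cdot> r = t \<cdot> Tm (g \<cdot> f)"
    using a f' g' by (simp add: tail2[OF f'(4)] tail2[OF g'(4)])
  have "(idt A \<otimes> (g \<cdot> f)) \<cdot> \<rho> = (idt A \<otimes> g) \<cdot> ((idt A \<otimes> f) \<cdot> \<rho>)"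
    using a f'(1-3) g'(1-3) by (simp add: merge_t)
  also have "\<dots> = \<tau> \<cdot> (g \<cdot> f)" using a f' g' by (simp add: tail2[OF g'(5)])
  finally show ?thesis using m f' g' a by (simp add: hmor_iff)
qed

lemma HM_cat: "category (HM C T)"
  unfolding category_def
proof (intro conjI ballI impI)
  fix F assume "F \<in> Arr (HM C T)"
  thus "Src (HM C T) F \<in> Obj (HM C T)" "Tgt (HM C T) F \<in> Obj (HM C T)"
    by (auto simp: HM_simps)
next
  fix MM assume "MM \<in> Obj (HM C T)"
  then obtain M r \<rho> where MM: "MM = (M, r, \<rho>)" "hopf_module C T (M, r, \<rho>)"
    by (cases MM) (auto simp: HM_simps)
  show "Idt (HM C T) MM \<in> hom (HM C T) MM MM"
    using MM hmor_id by (auto simp: HM_simps hom_def)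
next
  fix F G assume F: "F \<in> Arr (HM C T)" and G: "G \<in> Arr (HM C T)" and FG: "Tgt (HM C T) F = Src (HM C T) G"
  obtain M r \<rho> N s \<sigma> f where F': "F = ((M, r, \<rho>), (N, s, \<sigma>), f)" "hopf_module C T (M, r, \<rho>)"
      "hopf_module C T (N, s, \<sigma>)" "hopf_morphism C T (M, r, \<rho>) (N, s, \<sigma>) f"
    using F by (auto simp: HM_simps)
  obtain P t \<tau> g where G': "G = ((N, s, \<sigma>), (P, t, \<tau>), g)"
      "hopf_module C T (P, t, \<tau>)" "hopf_morphism C T (N, s, \<sigma>) (P, t, \<tau>) g"
    using G FG F' by (auto simp: HM_simps)
  show "Cmp (HM C T) G F \<in> hom (HM C T) (Src (HM C T) F) (Tgt (HM C T) G)"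
    using F' G' hmor_comp[of M r \<rho> N s \<sigma> P t \<tau> f g] by (auto simp: HM_simps hom_def)
next
  fix F assume F: "F \<in> Arr (HM C T)"
  obtain M r \<rho> N s \<sigma> f where F': "F = ((M, r, \<rho>), (N, s, \<sigma>), f)" "hopf_module C T (M, r, \<rho>)"
      "hopf_module C T (N, s, \<sigma>)" "hopf_morphism C T (M, r, \<rho>) (N, s, \<sigma>) f"
    using F by (auto simp: HM_simps)
  have "arr f" "dom f = M" "cod f = N" using F'(4) by (auto simp: hmor_iff)
  thus "Cmp (HM C T) (Idt (HM C T) (Tgt (HM C T) F)) F = F" "Cmp (HM C T) F (Idt (HM C T) (Src (HM C T) F)) = F"
    using F' by (simp_all add: HM_simps)
next
  fix F G H assume F: "F \<in> Arr (HM C T)" and G: "G \<in> Arr (HM C T)" and H: "H \<in> Arr (HM C T)"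
    and FG: "Tgt (HM C T) F = Src (HM C T) G" and GH: "Tgt (HM C T) G = Src (HM C T) H"
  obtain M r \<rho> N s \<sigma> f where F': "F = ((M, r, \<rho>), (N, s, \<sigma>), f)"
      "hopf_morphism C T (M, r, \<rho>) (N, s, \<sigma>) f"
    using F by (auto simp: HM_simps)
  obtain P t \<tau> g where G': "G = ((N, s, \<sigma>), (P, t, \<tau>), g)" "hopf_morphism C T (N, s, \<sigma>) (P, t, \<tau>) g"
    using G FG F' by (auto simp: HM_simps)
  obtain Q v \<omega> h where H': "H = ((P, t, \<tau>), (Q, v, \<omega>), h)" "hopf_morphism C T (P, t, \<tau>) (Q, v, \<omega>) h"
    using H GH G' by (auto simp: HM_simps)
  have "arr f" "dom f = M" "cod f = N" using F'(2) by (auto simp: hmor_iff)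
  moreover have "arr g" "dom g = N" "cod g = P" using G'(2) by (auto simp: hmor_iff)
  moreover have "arr h" "dom h = P" "cod h = Q" using H'(2) by (auto simp: hmor_iff)
  ultimately show "Cmp (HM C T) H (Cmp (HM C T) G F) = Cmp (HM C T) (Cmp (HM C T) H G) F"
    using F' G' H' by (simp add: HM_simps)
qed

lemma HMcat: "cat (HM C T)" by (rule cat.intro, rule HM_cat)

lemma hopf_hlO: "obj X \<Longrightarrow> hopf_module C T (hlO C T X)"
proof -
  assume X: "obj X"
  have "Tt u1 X \<cdot> \<mu> X = (\<mu> u1 \<otimes> \<mu> X) \<cdot> (Tt A (To X) \<cdot> Tm (Tt u1 X))"
    using mu_comon[of u1 X] X by simp
  thus ?thesis using X coassoc1[of X] Tt_counit[of X] mu_assoc[of X]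
    unfolding hlO_def hopf_module_def t_module_def t1_comodule_def by simp
qed

lemma hmor_hlM: "arr f \<Longrightarrow> hopf_morphism C T (hlO C T (dom f)) (hlO C T (cod f)) (Tm f)"
  unfolding hlO_def hmor_iff by (simp add: mu_nat Tt_nat1)

lemma hl_functor: "functor C (HM C T) (hlO C T) (hlM C T)"
  unfolding functor_def
proof (intro conjI ballI impI)
  show "category C" by (rule category)
  show "category (HM C T)" by (rule HM_cat)
next
  fix a assume "a \<in> Obj C" thus "hlO C T a \<in> Obj (HM C T)" by (simp add: HM_simps hopf_hlO)
next
  fix f assume "f \<in> Arr C"
  thus "hlM C T f \<in> hom (HM C T) (hlO C T (dom f)) (hlO C T (cod f))"
    using hopf_hlO hmor_hlM by (simp add: HM_simps hom_def hlM_def)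
next
  fix a assume "a \<in> Obj C" thus "hlM C T (idt a) = Idt (HM C T) (hlO C T a)"
    by (simp add: HM_simps hlM_def hlO_def)
next
  fix f g assume "f \<in> Arr C" "g \<in> Arr C" "cod f = dom g"
  thus "hlM C T (g \<cdot> f) = Cmp (HM C T) (hlM C T g) (hlM C T f)"
    by (simp add: HM_simps hlM_def)
qed

lemma hmor_inv: "hopf_module C T (M, r, \<rho>) \<Longrightarrow> hopf_module C T (N, s, \<sigma>) \<Longrightarrow>
  hopf_morphism C T (M, r, \<rho>) (N, s, \<sigma>) f \<Longrightarrow> iso C f \<Longrightarrow>
  hopf_morphism C T (N, s, \<sigma>) (M, r, \<rho>) (inv f)"
proof -
  assume hM: "hopf_module C T (M, r, \<rho>)" and hN: "hopf_module C T (N, s, \<sigma>)"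
    and f: "hopf_morphism C T (M, r, \<rho>) (N, s, \<sigma>) f" and i: "iso C f"
  note a = hopfD[OF hM] hopfD[OF hN]
  have f': "arr f" "dom f = M" "cod f = N" "f \<cdot> r = s \<cdot> Tm f" "(idt A \<otimes> f) \<cdot> \<rho> = \<sigma> \<cdot> f"
    using f by (auto simp: hmor_iff)
  have tfi: "Tm f \<cdot> Tm (inv f) = idt (To N)"
  proof -
    show ?thesis using Tm_comp[of "inv f" f] i f' a by simp
  qed
  have m: "inv f \<cdot> s = r \<cdot> Tm (inv f)"
  proof -
    have "inv f \<cdot> s = inv f \<cdot> (s \<cdot> (Tm f \<cdot> Tm (inv f)))"
      using a f'(1-3) i tfi by simp
    also have "\<dots> = inv f \<cdot> (f \<cdot> (r \<cdot> Tm (inv f)))"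
      using a f'(1-3) i by (simp add: tail2[OF f'(4)[symmetric]])
    also have "\<dots> = r \<cdot> Tm (inv f)" using a f'(1-3) i by simp
    finally show ?thesis .
  qed
  have c: "(idt A \<otimes> inv f) \<cdot> \<sigma> = \<rho> \<cdot> inv f"
  proof -
    have "(idt A \<otimes> inv f) \<cdot> \<sigma> = (idt A \<otimes> inv f) \<cdot> ((idt A \<otimes> f) \<cdot> (\<rho> \<cdot> inv f))"
      using a f'(1-3) i by (simp add: tail2[OF f'(5)])
    also have "\<dots> = \<rho> \<cdot> inv f" using a f'(1-3) i by (simp add: merge_t)
    finally show ?thesis .
  qed
  show ?thesis using m c a f' i by (simp add: hmor_iff)
qed

lemma iso_HM: "hopf_module C T MM \<Longrightarrow> hopf_module C T NN \<Longrightarrow> hopf_morphism C T MM NN f \<Longrightarrow> iso C f \<Longrightarrow>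
  iso (HM C T) (MM, NN, f)"
proof -
  assume hM: "hopf_module C T MM" and hN: "hopf_module C T NN" and f: "hopf_morphism C T MM NN f"
    and i: "iso C f"
  obtain M r \<rho> where MM: "MM = (M, r, \<rho>)" by (cases MM)
  obtain N s \<sigma> where NN: "NN = (N, s, \<sigma>)" by (cases NN)
  have f': "arr f" "dom f = M" "cod f = N" using f MM NN by (auto simp: hmor_iff)
  have g: "hopf_morphism C T NN MM (inv f)" using hmor_inv hM hN f i MM NN by simp
  have "(NN, MM, inv f) \<in> hom (HM C T) NN MM" using hM hN g by (simp add: HM_simps hom_def)
  moreover have "Cmp (HM C T) (NN, MM, inv f) (MM, NN, f) = Idt (HM C T) MM"
    using i f' MM by (simp add: HM_simps)
  moreover have "Cmp (HM C T) (MM, NN, f) (NN, MM, inv f) = Idt (HM C T) NN"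
    using i f' NN by (simp add: HM_simps)
  moreover have "(MM, NN, f) \<in> Arr (HM C T)" using hM hN f by (simp add: HM_simps)
  ultimately show ?thesis unfolding iso_def
    by (intro conjI bexI[where x="(NN, MM, inv f)"]) (simp_all add: HM_simps)
qed

lemma hmor_free: "hopf_module C T (M, r, \<rho>) \<Longrightarrow> obj Z \<Longrightarrow> arr k \<Longrightarrow> dom k = Z \<Longrightarrow> cod k = M \<Longrightarrow>
  \<rho> \<cdot> k = (\<eta> u1 \<otimes> idt M) \<cdot> k \<Longrightarrow> hopf_morphism C T (hlO C T Z) (M, r, \<rho>) (r \<cdot> Tm k)"
proof -
  assume h0: "hopf_module C T (M, r, \<rho>)" and k: "obj Z" "arr k" "dom k = Z" "cod k = M"
    and fk: "\<rho> \<cdot> k = (\<eta> u1 \<otimes> idt M) \<cdot> k"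
  note a = h[OF h0]
  have m: "(r \<cdot> Tm k) \<cdot> \<mu> Z = r \<cdot> Tm (r \<cdot> Tm k)"
  proof -
    have "r \<cdot> Tm (r \<cdot> Tm k) = r \<cdot> (\<mu> M \<cdot> Tm (Tm k))" using a k by (simp add: tail2[OF a(6)])
    also have "\<dots> = (r \<cdot> Tm k) \<cdot> \<mu> Z" using a k by (simp add: mu_nat')
    finally show ?thesis by simp
  qed
  have fT: "Tm (\<eta> u1 \<otimes> idt M) \<cdot> Tm k = Tm \<rho> \<cdot> Tm k"
    by (rule Tm_pair) (use a k fk in auto)
  have c: "(idt A \<otimes> (r \<cdot> Tm k)) \<cdot> Tt u1 Z = \<rho> \<cdot> (r \<cdot> Tm k)"
  proof -
    have "\<rho> \<cdot> (r \<cdot> Tm k) = K M r \<cdot> Tm k" using K_fork[OF h0, of "Tm k"] a k fT by simp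
    also have "\<dots> = (idt A \<otimes> r) \<cdot> ((idt A \<otimes> Tm k) \<cdot> Tt u1 Z)"
      using a k by (simp add: K_def Tt_nat1)
    also have "\<dots> = (idt A \<otimes> (r \<cdot> Tm k)) \<cdot> Tt u1 Z" using a k by (simp add: merge_t)
    finally show ?thesis by simp
  qed
  show ?thesis using m c a k unfolding hlO_def by (simp add: hmor_iff)
qed

lemma etaf: "arr f \<Longrightarrow> (\<eta> u1 \<otimes> idt (cod f)) \<cdot> f = (idt A \<otimes> f) \<cdot> (\<eta> u1 \<otimes> idt (dom f))"
  using merge[of "idt u1" "\<eta> u1" f "idt (cod f)"] merge[of "\<eta> u1" "idt A" "idt (dom f)" f] by simp

lemma etaf_t: "arr f \<Longrightarrow> dom f = M \<Longrightarrow> arr x \<Longrightarrow> cod x = M \<Longrightarrow>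
  (idt A \<otimes> f) \<cdot> ((\<eta> u1 \<otimes> idt M) \<cdot> x) = (\<eta> u1 \<otimes> idt (cod f)) \<cdot> (f \<cdot> x)"
  using tail2[OF etaf[symmetric], of f x] obj_dom[of f] by simp

lemma fork_eta: "obj X \<Longrightarrow> Tt u1 X \<cdot> \<eta> X = (\<eta> u1 \<otimes> idt (To X)) \<cdot> \<eta> X"
  using eta_comon[of u1 X] etaf[of "\<eta> X"] merge[of "\<eta> u1" "idt A" "idt X" "\<eta> X"] by simp

lemma fork_hmor: "hopf_module C T (M, r, \<rho>) \<Longrightarrow> hopf_module C T (N, s, \<sigma>) \<Longrightarrow>
  hopf_morphism C T (M, r, \<rho>) (N, s, \<sigma>) f \<Longrightarrow> arr i \<Longrightarrow> cod i = M \<Longrightarrow>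
  \<rho> \<cdot> i = (\<eta> u1 \<otimes> idt M) \<cdot> i \<Longrightarrow> \<sigma> \<cdot> (f \<cdot> i) = (\<eta> u1 \<otimes> idt N) \<cdot> (f \<cdot> i)"
proof -
  assume hM: "hopf_module C T (M, r, \<rho>)" and hN: "hopf_module C T (N, s, \<sigma>)"
    and f: "hopf_morphism C T (M, r, \<rho>) (N, s, \<sigma>) f" and i: "arr i" "cod i = M"
    and fi: "\<rho> \<cdot> i = (\<eta> u1 \<otimes> idt M) \<cdot> i"
  note a = hopfD[OF hM] hopfD[OF hN]
  have f': "arr f" "dom f = M" "cod f = N" "f \<cdot> r = s \<cdot> Tm f" "(idt A \<otimes> f) \<cdot> \<rho> = \<sigma> \<cdot> f"
    using f by (auto simp: hmor_iff)
  have "\<sigma> \<cdot> (f \<cdot> i) = (idt A \<otimes> f) \<cdot> (\<rho> \<cdot> i)" using a f' i by (simp add: tail2[OF f'(5)])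
  also have "\<dots> = (idt A \<otimes> f) \<cdot> ((\<eta> u1 \<otimes> idt M) \<cdot> i)" using fi by simp
  also have "\<dots> = (\<eta> u1 \<otimes> idt N) \<cdot> (f \<cdot> i)"
    using a f'(1-3) i by (simp add: etaf_t)
  finally show ?thesis .
qed

lemma Tm_eta_equalizer: "obj X \<Longrightarrow>
  is_equalizer C (Tm (\<eta> u1 \<otimes> idt (To X))) (Tm (Tt u1 X)) (To X) (Tm (\<eta> X))"
proof -
  assume X: "obj X"
  have "Ki (To X) (\<mu> X) \<cdot> Tt u1 X = Tm (\<eta> X)" using X claimC[of X] by (simp add: Ki_def)
  thus ?thesis using j_equalizer[OF hopf_hlO[OF X, unfolded hlO_def]] by simp
qed

lemma coinv_iff: "coinvariant_part C T (M, r, \<rho>) E i \<longleftrightarrow> is_equalizer C (\<eta> u1 \<otimes> idt M) \<rho> E i"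
  by (simp add: coinvariant_part_def)

end

lemma functor_iso: "functor A B FO FM \<Longrightarrow> iso A f \<Longrightarrow> iso B (FM f)"
proof -
  assume F: "functor A B FO FM" and i: "iso A f"
  then obtain g where g: "g \<in> hom A (Tgt A f) (Src A f)" "Cmp A g f = Idt A (Src A f)"
    "Cmp A f g = Idt A (Tgt A f)" and f: "f \<in> Arr A" unfolding iso_def by blast
  have cA: "category A" using F unfolding functor_def by blast
  have ST: "Src A f \<in> Obj A" "Tgt A f \<in> Obj A" using cA f unfolding category_def by blast+
  have Ff: "FM f \<in> hom B (FO (Src A f)) (FO (Tgt A f))" using F f unfolding functor_def by blast
  have Fg: "FM g \<in> hom B (FO (Tgt A f)) (FO (Src A f))" using F g(1) unfolding functor_def hom_def by auto
  have "Cmp B (FM g) (FM f) = FM (Cmp A g f)" using F f g(1) unfolding functor_def hom_def by auto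
  also have "\<dots> = Idt B (FO (Src A f))" using F ST g(2) unfolding functor_def by auto
  finally have e1: "Cmp B (FM g) (FM f) = Idt B (Src B (FM f))" using Ff by (simp add: hom_def)
  have "Cmp B (FM f) (FM g) = FM (Cmp A f g)" using F f g(1) unfolding functor_def hom_def by auto
  also have "\<dots> = Idt B (FO (Tgt A f))" using F ST g(3) unfolding functor_def by auto
  finally have e2: "Cmp B (FM f) (FM g) = Idt B (Tgt B (FM f))" using Ff by (simp add: hom_def)
  show ?thesis unfolding iso_def using Ff Fg e1 e2 by (auto simp: hom_def)
qed

lemma functor_typ: "functor A B FO FM \<Longrightarrow> f \<in> Arr A \<Longrightarrow> FM f \<in> hom B (FO (Src A f)) (FO (Tgt A f))"
  unfolding functor_def by blast

context lph begin

lemma Tm_iso: "iso C f \<Longrightarrow> iso C (Tm f)" using functor_iso[OF fT] .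

lemma qi:
  assumes cons: "conservative C T" and pres: "preserves_coinvariant_parts C T"
    and cf: "coinvariant_functor C T GO GM \<iota>"
  shows "quasi_inverse C (HM C T) (hlO C T) (hlM C T) GO GM"
proof -
  have G: "functor (HM C T) C GO GM" using cf unfolding coinvariant_functor_def by blast
  have coinv: "\<And>MM. hopf_module C T MM \<Longrightarrow> coinvariant_part C T MM (GO MM) (\<iota> MM)"
    using cf unfolding coinvariant_functor_def by (auto simp: HM_simps)
  have natG: "\<And>F. F \<in> Arr (HM C T) \<Longrightarrow>
      \<iota> (Tgt (HM C T) F) \<cdot> GM F = snd (snd F) \<cdot> \<iota> (Src (HM C T) F)"
    using cf unfolding coinvariant_functor_def by blast
  have presT: "\<And>M r \<rho> E i. hopf_module C T (M, r, \<rho>) \<Longrightarrow> is_equalizer C (\<eta> u1 \<otimes> idt M) \<rho> E i \<Longrightarrow>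
      is_equalizer C (Tm (\<eta> u1 \<otimes> idt M)) (Tm \<rho>) (To E) (Tm i)"
    using pres unfolding preserves_coinvariant_parts_def coinv_iff by blast
  have consI: "\<And>f. arr f \<Longrightarrow> iso C (Tm f) \<Longrightarrow> iso C f" using cons unfolding conservative_def by blast
  have Gtyp: "\<And>F. F \<in> Arr (HM C T) \<Longrightarrow> arr (GM F) \<and> dom (GM F) = GO (fst F) \<and> cod (GM F) = GO (fst (snd F))"
    using functor_typ[OF G] by (auto simp: HM_simps)
  have eqX: "\<And>X. obj X \<Longrightarrow> is_equalizer C (\<eta> u1 \<otimes> idt (To X)) (Tt u1 X) (GO (hlO C T X)) (\<iota> (hlO C T X))"
  proof -
    fix X assume X: "obj X"
    have "coinvariant_part C T (hlO C T X) (GO (hlO C T X)) (\<iota> (hlO C T X))" using coinv hopf_hlO X by blast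
    thus "is_equalizer C (\<eta> u1 \<otimes> idt (To X)) (Tt u1 X) (GO (hlO C T X)) (\<iota> (hlO C T X))"
      by (simp add: hlO_def coinv_iff)
  qed
  define phi where "phi X = (SOME u. arr u \<and> dom u = X \<and> cod u = GO (hlO C T X) \<and> \<iota> (hlO C T X) \<cdot> u = \<eta> X)" for X
  have phi: "\<And>X. obj X \<Longrightarrow> arr (phi X) \<and> dom (phi X) = X \<and> cod (phi X) = GO (hlO C T X) \<and>
      \<iota> (hlO C T X) \<cdot> phi X = \<eta> X"
  proof -
    fix X assume X: "obj X"
    have "\<exists>u. arr u \<and> dom u = X \<and> cod u = GO (hlO C T X) \<and> \<iota> (hlO C T X) \<cdot> u = \<eta> X"
      using eq_lift[OF eqX[OF X], of "\<eta> X"] X fork_eta[OF X] by simp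
    thus "arr (phi X) \<and> dom (phi X) = X \<and> cod (phi X) = GO (hlO C T X) \<and> \<iota> (hlO C T X) \<cdot> phi X = \<eta> X"
      unfolding phi_def by (rule someI_ex)
  qed
  have phi_iso: "\<And>X. obj X \<Longrightarrow> iso C (phi X)"
  proof -
    fix X assume X: "obj X"
    note p = phi[OF X] eq_props[OF eqX[OF X]]
    have e1: "is_equalizer C (Tm (\<eta> u1 \<otimes> idt (To X))) (Tm (Tt u1 X)) (To (GO (hlO C T X))) (Tm (\<iota> (hlO C T X)))"
      using presT[OF hopf_hlO[OF X, unfolded hlO_def] eqX[OF X]] .
    have "Tm (\<iota> (hlO C T X)) \<cdot> Tm (phi X) = Tm (\<eta> X)"
      using p X Tm_comp[of "phi X" "\<iota> (hlO C T X)"] by simp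
    hence "iso C (Tm (phi X))"
      using eq_comparison_iso[OF e1 Tm_eta_equalizer[OF X], of "Tm (phi X)"] p X by simp
    thus "iso C (phi X)" using consI p by blast
  qed
  have nat1: "nat_iso C C (\<lambda>a. a) (\<lambda>f. f) (GO \<circ> hlO C T) (GM \<circ> hlM C T) phi"
    unfolding nat_iso_def
  proof (intro conjI ballI)
    fix a assume "a \<in> Obj C" thus "phi a \<in> hom C a ((GO \<circ> hlO C T) a)" "iso C (phi a)"
      using phi phi_iso by auto
  next
    fix f assume f: "f \<in> Arr C"
    obtain X Y where XYd: "dom f = X" "cod f = Y" by blast
    have XY: "obj X" "obj Y" using f XYd by auto
    have hf: "hlM C T f \<in> Arr (HM C T)" "Src (HM C T) (hlM C T f) = hlO C T X"
        "Tgt (HM C T) (hlM C T f) = hlO C T Y" "snd (snd (hlM C T f)) = Tm f"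
      using functor_typ[OF hl_functor f] by (auto simp: hlM_def XYd HM_simps hom_def)
    have Gf: "arr (GM (hlM C T f))" "dom (GM (hlM C T f)) = GO (hlO C T X)" "cod (GM (hlM C T f)) = GO (hlO C T Y)"
      using Gtyp[OF hf(1)] hf by (auto simp: HM_simps)
    have nf: "\<iota> (hlO C T Y) \<cdot> GM (hlM C T f) = Tm f \<cdot> \<iota> (hlO C T X)" using natG[OF hf(1)] hf by simp
    note pX = phi[OF XY(1)] eq_props[OF eqX[OF XY(1)]] and pY = phi[OF XY(2)] eq_props[OF eqX[OF XY(2)]]
    have "phi Y \<cdot> f = GM (hlM C T f) \<cdot> phi X"
    proof (rule eq_mono[OF eqX[OF XY(2)]])
      have pYe: "\<iota> (hlO C T Y) \<cdot> phi Y = \<eta> Y" using pY by blast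
      have "\<iota> (hlO C T Y) \<cdot> (phi Y \<cdot> f) = \<eta> Y \<cdot> f" using pY f by (simp add: tail2[OF pYe] XYd)
      also have "\<dots> = Tm f \<cdot> \<eta> X" using f by (simp add: eta_nat' XYd)
      also have "\<dots> = \<iota> (hlO C T Y) \<cdot> (GM (hlM C T f) \<cdot> phi X)"
        using pX pY Gf f XY by (simp add: tail2[OF nf] XYd)
      finally show "\<iota> (hlO C T Y) \<cdot> (phi Y \<cdot> f) = \<iota> (hlO C T Y) \<cdot> (GM (hlM C T f) \<cdot> phi X)" .
    qed (use pX pY Gf f in \<open>auto simp: XYd\<close>)
    thus "phi (cod ((\<lambda>f. f) f)) \<cdot> (\<lambda>f. f) f = (GM \<circ> hlM C T) f \<cdot> phi (dom ((\<lambda>f. f) f))"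
      by (simp add: XYd)
  qed
  define eps where "eps MM = fst (snd MM) \<cdot> Tm (\<iota> MM)" for MM
  define psi where "psi MM = (MM, hlO C T (GO MM), inv (eps MM))" for MM
  have epsP: "\<And>M r \<rho>. hopf_module C T (M, r, \<rho>) \<Longrightarrow>
     hopf_morphism C T (hlO C T (GO (M, r, \<rho>))) (M, r, \<rho>) (eps (M, r, \<rho>)) \<and> iso C (eps (M, r, \<rho>)) \<and>
     obj (GO (M, r, \<rho>))"
  proof -
    fix M r \<rho> assume h0: "hopf_module C T (M, r, \<rho>)"
    note a = h[OF h0]
    have eqM: "is_equalizer C (\<eta> u1 \<otimes> idt M) \<rho> (GO (M, r, \<rho>)) (\<iota> (M, r, \<rho>))"
      using coinv[OF h0] coinv_iff by blast
    note e = eq_props[OF eqM]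
    have i: "arr (\<iota> (M, r, \<rho>))" "dom (\<iota> (M, r, \<rho>)) = GO (M, r, \<rho>)" "cod (\<iota> (M, r, \<rho>)) = M"
      "\<rho> \<cdot> \<iota> (M, r, \<rho>) = (\<eta> u1 \<otimes> idt M) \<cdot> \<iota> (M, r, \<rho>)" using e a by auto
    have hm: "hopf_morphism C T (hlO C T (GO (M, r, \<rho>))) (M, r, \<rho>) (eps (M, r, \<rho>))"
      using hmor_free[OF h0 e(9) i] by (simp add: eps_def)
    have eqT: "is_equalizer C (Tm (\<eta> u1 \<otimes> idt M)) (Tm \<rho>) (To (GO (M, r, \<rho>))) (Tm (\<iota> (M, r, \<rho>)))"
      by (rule presT[OF h0 eqM])
    have fT: "Tm (\<eta> u1 \<otimes> idt M) \<cdot> Tm (\<iota> (M, r, \<rho>)) = Tm \<rho> \<cdot> Tm (\<iota> (M, r, \<rho>))"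
      by (rule Tm_pair) (use a i in auto)
    have "(Ki M r \<cdot> \<rho>) \<cdot> eps (M, r, \<rho>) = Tm (\<iota> (M, r, \<rho>))"
      using J3[OF h0, of "Tm (\<iota> (M, r, \<rho>))"] fT a i by (simp add: eps_def)
    hence "iso C (eps (M, r, \<rho>))"
      using eq_comparison_iso[OF j_equalizer[OF h0] eqT, of "eps (M, r, \<rho>)"] a i e by (simp add: eps_def)
    thus "hopf_morphism C T (hlO C T (GO (M, r, \<rho>))) (M, r, \<rho>) (eps (M, r, \<rho>)) \<and> iso C (eps (M, r, \<rho>)) \<and>
     obj (GO (M, r, \<rho>))" using hm e by simp
  qed
  have psiP: "\<And>MM. hopf_module C T MM \<Longrightarrow> psi MM \<in> hom (HM C T) MM (hlO C T (GO MM)) \<and> iso (HM C T) (psi MM)"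
  proof -
    fix MM assume h0: "hopf_module C T MM"
    obtain M r \<rho> where MM: "MM = (M, r, \<rho>)" by (cases MM)
    note ep = epsP[OF h0[unfolded MM]]
    have hG: "hopf_module C T (hlO C T (GO MM))" using hopf_hlO ep MM by simp
    have hi: "hopf_morphism C T MM (hlO C T (GO MM)) (inv (eps MM))"
      using hmor_inv[of "To (GO MM)" "\<mu> (GO MM)" "Tt u1 (GO MM)" M r \<rho> "eps MM"] hG h0 ep MM
      by (simp add: hlO_def)
    have ii: "iso C (inv (eps MM))" using ep MM by simp
    show "psi MM \<in> hom (HM C T) MM (hlO C T (GO MM)) \<and> iso (HM C T) (psi MM)"
      using iso_HM[OF h0 hG hi ii] h0 hG hi by (simp add: psi_def hom_def HM_simps)
  qed
  have nat2: "nat_iso (HM C T) (HM C T) (\<lambda>a. a) (\<lambda>f. f) (hlO C T \<circ> GO) (hlM C T \<circ> GM) psi"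
    unfolding nat_iso_def
  proof (intro conjI ballI)
    fix a assume "a \<in> Obj (HM C T)"
    thus "psi a \<in> hom (HM C T) a ((hlO C T \<circ> GO) a)" "iso (HM C T) (psi a)"
      using psiP by (auto simp: HM_simps)
  next
    fix F assume F: "F \<in> Arr (HM C T)"
    obtain M r \<rho> N s \<sigma> f where F': "F = ((M, r, \<rho>), (N, s, \<sigma>), f)" "hopf_module C T (M, r, \<rho>)"
      "hopf_module C T (N, s, \<sigma>)" "hopf_morphism C T (M, r, \<rho>) (N, s, \<sigma>) f"
      using F by (auto simp: HM_simps)
    note aM = h[OF F'(2)] and aN = h[OF F'(3)]
    have f': "arr f" "dom f = M" "cod f = N" "f \<cdot> r = s \<cdot> Tm f"
      using F'(4) by (auto simp: hmor_iff)
    note eM = epsP[OF F'(2)] and eN = epsP[OF F'(3)]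
    have GF: "arr (GM F)" "dom (GM F) = GO (M, r, \<rho>)" "cod (GM F) = GO (N, s, \<sigma>)"
      using Gtyp[OF F] F' by auto
    have eqM: "is_equalizer C (\<eta> u1 \<otimes> idt M) \<rho> (GO (M, r, \<rho>)) (\<iota> (M, r, \<rho>))"
      using coinv[OF F'(2)] coinv_iff by blast
    have eqN: "is_equalizer C (\<eta> u1 \<otimes> idt N) \<sigma> (GO (N, s, \<sigma>)) (\<iota> (N, s, \<sigma>))"
      using coinv[OF F'(3)] coinv_iff by blast
    note iM = eq_props[OF eqM] and iN = eq_props[OF eqN]
    have nF: "\<iota> (N, s, \<sigma>) \<cdot> GM F = f \<cdot> \<iota> (M, r, \<rho>)" using natG[OF F] F' by (simp add: HM_simps)
    have tn: "Tm (\<iota> (N, s, \<sigma>)) \<cdot> Tm (GM F) = Tm f \<cdot> Tm (\<iota> (M, r, \<rho>))"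
      by (rule Tm_pair) (use nF GF iM iN f' aM aN in auto)
    have f4: "s \<cdot> Tm f = f \<cdot> r" using f'(4) by simp
    have ke: "eps (N, s, \<sigma>) \<cdot> Tm (GM F) = f \<cdot> eps (M, r, \<rho>)"
      using aM aN f'(1-3) iM iN GF by (simp add: eps_def tn tail2[OF f4])
    have eMi: "iso C (eps (M, r, \<rho>))" and eNi: "iso C (eps (N, s, \<sigma>))" using eM eN by auto
    have eMt: "dom (eps (M, r, \<rho>)) = To (GO (M, r, \<rho>))" "cod (eps (M, r, \<rho>)) = M"
      using aM iM by (auto simp: eps_def)
    have eNt: "dom (eps (N, s, \<sigma>)) = To (GO (N, s, \<sigma>))" "cod (eps (N, s, \<sigma>)) = N"
      using aN iN by (auto simp: eps_def)
    have key: "inv (eps (N, s, \<sigma>)) \<cdot> f = Tm (GM F) \<cdot> inv (eps (M, r, \<rho>))"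
    proof (rule iso_cancel_right[OF eMi])
      have "(inv (eps (N, s, \<sigma>)) \<cdot> f) \<cdot> eps (M, r, \<rho>) = inv (eps (N, s, \<sigma>)) \<cdot> (eps (N, s, \<sigma>) \<cdot> Tm (GM F))"
        using eMi eNi eMt eNt f'(1-3) GF by (simp add: ke)
      also have "\<dots> = (Tm (GM F) \<cdot> inv (eps (M, r, \<rho>))) \<cdot> eps (M, r, \<rho>)"
        using eMi eNi eMt eNt f'(1-3) GF by simp
      finally show "(inv (eps (N, s, \<sigma>)) \<cdot> f) \<cdot> eps (M, r, \<rho>) = (Tm (GM F) \<cdot> inv (eps (M, r, \<rho>))) \<cdot> eps (M, r, \<rho>)" .
    qed (use eMi eNi eMt eNt f'(1-3) GF in auto)
    show "Cmp (HM C T) (psi (Tgt (HM C T) ((\<lambda>f. f) F))) ((\<lambda>f. f) F) =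
          Cmp (HM C T) ((hlM C T \<circ> GM) F) (psi (Src (HM C T) ((\<lambda>f. f) F)))"
      using F' GF key by (simp add: HM_simps psi_def hlM_def)
  qed
  show ?thesis unfolding quasi_inverse_def using hl_functor G nat1 nat2 by blast
qed


lemma cf_exists:
  assumes hc: "has_coinvariant_parts C T"
  shows "\<exists>GO GM \<iota>. coinvariant_functor C T GO GM \<iota>"
proof -
  define P where "P MM = (SOME p. coinvariant_part C T MM (fst p) (snd p))" for MM
  define GO where "GO MM = fst (P MM)" for MM
  define \<iota> where "\<iota> MM = snd (P MM)" for MM
  have cp: "\<And>MM. hopf_module C T MM \<Longrightarrow> coinvariant_part C T MM (GO MM) (\<iota> MM)"
  proof -
    fix MM assume "hopf_module C T MM"
    then obtain E i where "coinvariant_part C T MM E i" using hc unfolding has_coinvariant_parts_def by blast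
    hence "\<exists>p. coinvariant_part C T MM (fst p) (snd p)" by (intro exI[where x="(E, i)"]) simp
    thus "coinvariant_part C T MM (GO MM) (\<iota> MM)" unfolding GO_def \<iota>_def P_def by (rule someI_ex)
  qed
  have eqs: "\<And>M r \<rho>. hopf_module C T (M, r, \<rho>) \<Longrightarrow> is_equalizer C (\<eta> u1 \<otimes> idt M) \<rho> (GO (M, r, \<rho>)) (\<iota> (M, r, \<rho>))"
    using cp coinv_iff by blast
  define GM where "GM F = (SOME u. arr u \<and> dom u = GO (fst F) \<and> cod u = GO (fst (snd F)) \<and>
      \<iota> (fst (snd F)) \<cdot> u = snd (snd F) \<cdot> \<iota> (fst F))" for F
  have gm: "\<And>F. F \<in> Arr (HM C T) \<Longrightarrow> arr (GM F) \<and> dom (GM F) = GO (fst F) \<and> cod (GM F) = GO (fst (snd F)) \<and>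
      \<iota> (fst (snd F)) \<cdot> GM F = snd (snd F) \<cdot> \<iota> (fst F)"
  proof -
    fix F assume F: "F \<in> Arr (HM C T)"
    obtain M r \<rho> N s \<sigma> f where F': "F = ((M, r, \<rho>), (N, s, \<sigma>), f)" "hopf_module C T (M, r, \<rho>)"
      "hopf_module C T (N, s, \<sigma>)" "hopf_morphism C T (M, r, \<rho>) (N, s, \<sigma>) f"
      using F by (auto simp: HM_simps)
    note aM = h[OF F'(2)] and aN = h[OF F'(3)]
    have f': "arr f" "dom f = M" "cod f = N" using F'(4) by (auto simp: hmor_iff)
    note iM = eq_props[OF eqs[OF F'(2)]] and iN = eq_props[OF eqs[OF F'(3)]]
    have fk: "\<sigma> \<cdot> (f \<cdot> \<iota> (M, r, \<rho>)) = (\<eta> u1 \<otimes> idt N) \<cdot> (f \<cdot> \<iota> (M, r, \<rho>))"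
      by (rule fork_hmor[OF F'(2-4)]) (use iM aM in auto)
    have "\<exists>u. arr u \<and> dom u = GO (M, r, \<rho>) \<and> cod u = GO (N, s, \<sigma>) \<and> \<iota> (N, s, \<sigma>) \<cdot> u = f \<cdot> \<iota> (M, r, \<rho>)"
      using eq_lift[OF eqs[OF F'(3)], of "f \<cdot> \<iota> (M, r, \<rho>)"] fk f' iM aN by auto
    hence "\<exists>u. arr u \<and> dom u = GO (fst F) \<and> cod u = GO (fst (snd F)) \<and> \<iota> (fst (snd F)) \<cdot> u = snd (snd F) \<cdot> \<iota> (fst F)"
      using F' by simp
    thus "arr (GM F) \<and> dom (GM F) = GO (fst F) \<and> cod (GM F) = GO (fst (snd F)) \<and>
      \<iota> (fst (snd F)) \<cdot> GM F = snd (snd F) \<cdot> \<iota> (fst F)" unfolding GM_def by (rule someI_ex)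
  qed
  have Gfun: "functor (HM C T) C GO GM"
    unfolding functor_def
  proof (intro conjI ballI impI)
    show "category (HM C T)" by (rule HM_cat)
    show "category C" by (rule category)
  next
    fix a assume "a \<in> Obj (HM C T)"
    then obtain M r \<rho> where a: "a = (M, r, \<rho>)" "hopf_module C T (M, r, \<rho>)" by (cases a) (auto simp: HM_simps)
    show "GO a \<in> Obj C" using eq_props(9)[OF eqs[OF a(2)]] a by simp
  next
    fix F assume "F \<in> Arr (HM C T)"
    thus "GM F \<in> hom C (GO (Src (HM C T) F)) (GO (Tgt (HM C T) F))" using gm by (simp add: HM_simps)
  next
    fix a assume "a \<in> Obj (HM C T)"
    then obtain M r \<rho> where a: "a = (M, r, \<rho>)" "hopf_module C T (M, r, \<rho>)" by (cases a) (auto simp: HM_simps)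
    have Ia: "Idt (HM C T) a \<in> Arr (HM C T)" using a hmor_id by (simp add: HM_simps)
    note g = gm[OF Ia] and i = eq_props[OF eqs[OF a(2)]] and aa = h[OF a(2)]
    show "GM (Idt (HM C T) a) = idt (GO a)"
    proof (rule eq_mono[OF eqs[OF a(2)]])
      show "\<iota> (M, r, \<rho>) \<cdot> GM (Idt (HM C T) a) = \<iota> (M, r, \<rho>) \<cdot> idt (GO a)"
        using g i aa a by (simp add: HM_simps)
    qed (use g i aa a in \<open>auto simp: HM_simps\<close>)
  next
    fix F G assume F: "F \<in> Arr (HM C T)" and G: "G \<in> Arr (HM C T)" and FG: "Tgt (HM C T) F = Src (HM C T) G"
    obtain M r \<rho> N s \<sigma> f where F': "F = ((M, r, \<rho>), (N, s, \<sigma>), f)" "hopf_module C T (M, r, \<rho>)"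
        "hopf_module C T (N, s, \<sigma>)" "hopf_morphism C T (M, r, \<rho>) (N, s, \<sigma>) f"
      using F by (auto simp: HM_simps)
    obtain P t \<tau> g where G': "G = ((N, s, \<sigma>), (P, t, \<tau>), g)"
        "hopf_module C T (P, t, \<tau>)" "hopf_morphism C T (N, s, \<sigma>) (P, t, \<tau>) g"
      using G FG F' by (auto simp: HM_simps)
    have f': "arr f" "dom f = M" "cod f = N" using F'(4) by (auto simp: hmor_iff)
    have g': "arr g" "dom g = N" "cod g = P" using G'(3) by (auto simp: hmor_iff)
    have GF: "Cmp (HM C T) G F \<in> Arr (HM C T)"
      using F' G' hmor_comp[of M r \<rho> N s \<sigma> P t \<tau> f g] by (simp add: HM_simps)
    note gF = gm[OF F] and gG = gm[OF G] and gGF = gm[OF GF]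
    note iM = eq_props[OF eqs[OF F'(2)]] and iN = eq_props[OF eqs[OF F'(3)]] and iP = eq_props[OF eqs[OF G'(2)]]
    have eF: "\<iota> (N, s, \<sigma>) \<cdot> GM F = f \<cdot> \<iota> (M, r, \<rho>)" using gF F' by simp
    have eG: "\<iota> (P, t, \<tau>) \<cdot> GM G = g \<cdot> \<iota> (N, s, \<sigma>)" using gG G' by simp
    show "GM (Cmp (HM C T) G F) = GM G \<cdot> GM F"
    proof (rule eq_mono[OF eqs[OF G'(2)]])
      have "\<iota> (P, t, \<tau>) \<cdot> GM (Cmp (HM C T) G F) = (g \<cdot> f) \<cdot> \<iota> (M, r, \<rho>)" using gGF F' G' by (simp add: HM_simps)
      also have "\<dots> = \<iota> (P, t, \<tau>) \<cdot> (GM G \<cdot> GM F)"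
      proof -
        have tF: "arr (GM F)" "dom (GM F) = GO (M, r, \<rho>)" "cod (GM F) = GO (N, s, \<sigma>)" using gF F'(1) by auto
        have tG: "arr (GM G)" "dom (GM G) = GO (N, s, \<sigma>)" "cod (GM G) = GO (P, t, \<tau>)" using gG G'(1) by auto
        show ?thesis
          using tF tG f' g' iM iN iP h[OF F'(2)] h[OF F'(3)] h[OF G'(2)] by (simp add: tail2[OF eG] eF)
      qed
      finally show "\<iota> (P, t, \<tau>) \<cdot> GM (Cmp (HM C T) G F) = \<iota> (P, t, \<tau>) \<cdot> (GM G \<cdot> GM F)" .
    qed (use gF gG gGF F' G' in \<open>auto simp: HM_simps\<close>)
  qed
  have "coinvariant_functor C T GO GM \<iota>"
    unfolding coinvariant_functor_def
  proof (intro conjI ballI)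
    show "functor (HM C T) C GO GM" by (rule Gfun)
  next
    fix MM assume "MM \<in> Obj (HM C T)" thus "coinvariant_part C T MM (GO MM) (\<iota> MM)" using cp by (simp add: HM_simps)
  next
    fix F assume "F \<in> Arr (HM C T)"
    thus "\<iota> (Tgt (HM C T) F) \<cdot> GM F = snd (snd F) \<cdot> \<iota> (Src (HM C T) F)" using gm by (simp add: HM_simps)
  qed
  thus ?thesis by blast
qed


lemma HM_cancel_left: "iso (HM C T) P \<Longrightarrow> F1 \<in> Arr (HM C T) \<Longrightarrow> F2 \<in> Arr (HM C T) \<Longrightarrow>
  Tgt (HM C T) F1 = Src (HM C T) P \<Longrightarrow> Tgt (HM C T) F2 = Src (HM C T) P \<Longrightarrow>
  Cmp (HM C T) P F1 = Cmp (HM C T) P F2 \<Longrightarrow> F1 = F2"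
  using cat.iso_cancel_left[OF HMcat] by blast

lemma equiv_ii:
  assumes qi: "quasi_inverse C (HM C T) (hlO C T) (hlM C T) GO GM"
  shows "conservative C T \<and> has_coinvariant_parts C T \<and> preserves_coinvariant_parts C T"
proof -
  have G: "functor (HM C T) C GO GM" using qi unfolding quasi_inverse_def by blast
  obtain phi where phi: "nat_iso C C (\<lambda>a. a) (\<lambda>f. f) (GO \<circ> hlO C T) (GM \<circ> hlM C T) phi"
    using qi unfolding quasi_inverse_def by blast
  obtain psi where psi: "nat_iso (HM C T) (HM C T) (\<lambda>a. a) (\<lambda>f. f) (hlO C T \<circ> GO) (hlM C T \<circ> GM) psi"
    using qi unfolding quasi_inverse_def by blast
  have phiP: "\<And>X. obj X \<Longrightarrow> arr (phi X) \<and> dom (phi X) = X \<and> cod (phi X) = GO (hlO C T X) \<and> iso C (phi X)"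
    using phi unfolding nat_iso_def by auto
  have phiN: "\<And>f. arr f \<Longrightarrow> phi (cod f) \<cdot> f = GM (hlM C T f) \<cdot> phi (dom f)"
    using phi unfolding nat_iso_def by auto
  have psiP: "\<And>MM. hopf_module C T MM \<Longrightarrow> psi MM \<in> hom (HM C T) MM (hlO C T (GO MM)) \<and> iso (HM C T) (psi MM)"
    using psi unfolding nat_iso_def by (auto simp: HM_simps)
  have psiN: "\<And>F. F \<in> Arr (HM C T) \<Longrightarrow>
      Cmp (HM C T) (psi (Tgt (HM C T) F)) F = Cmp (HM C T) (hlM C T (GM F)) (psi (Src (HM C T) F))"
    using psi unfolding nat_iso_def by auto
  have Gtyp: "\<And>F. F \<in> Arr (HM C T) \<Longrightarrow> arr (GM F) \<and> dom (GM F) = GO (fst F) \<and> cod (GM F) = GO (fst (snd F))"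
    using functor_typ[OF G] by (auto simp: HM_simps)
  have hlM_arr: "\<And>u. arr u \<Longrightarrow> hlM C T u \<in> Arr (HM C T)"
    using hopf_hlO hmor_hlM by (simp add: HM_simps hlM_def)
  have faith: "\<And>u u'. arr u \<Longrightarrow> arr u' \<Longrightarrow> dom u = dom u' \<Longrightarrow> cod u = cod u' \<Longrightarrow> Tm u = Tm u' \<Longrightarrow> u = u'"
  proof -
    fix u u' assume u: "arr u" "arr u'" "dom u = dom u'" "cod u = cod u'" "Tm u = Tm u'"
    have "hlM C T u = hlM C T u'" using u by (simp add: hlM_def)
    hence e: "phi (cod u) \<cdot> u = phi (cod u) \<cdot> u'" using phiN[OF u(1)] phiN[OF u(2)] u by simp
    have pc: "iso C (phi (cod u))" "dom (phi (cod u)) = cod u" using phiP[of "cod u"] u by auto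
    show "u = u'" by (rule iso_cancel_left[OF pc(1) u(1,2) _ _ e]) (use pc u in auto)
  qed
  have faithG: "\<And>F1 F2. F1 \<in> Arr (HM C T) \<Longrightarrow> F2 \<in> Arr (HM C T) \<Longrightarrow> fst F1 = fst F2 \<Longrightarrow>
      fst (snd F1) = fst (snd F2) \<Longrightarrow> GM F1 = GM F2 \<Longrightarrow> F1 = F2"
  proof -
    fix F1 F2 assume F: "F1 \<in> Arr (HM C T)" "F2 \<in> Arr (HM C T)" "fst F1 = fst F2"
      "fst (snd F1) = fst (snd F2)" "GM F1 = GM F2"
    have hN: "hopf_module C T (fst (snd F1))" using F(1) by (auto simp: HM_simps)
    note pN = psiP[OF hN]
    have e: "Cmp (HM C T) (psi (fst (snd F1))) F1 = Cmp (HM C T) (psi (fst (snd F1))) F2"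
      using psiN[OF F(1)] psiN[OF F(2)] F by (simp add: HM_simps)
    show "F1 = F2"
      by (rule HM_cancel_left[OF conjunct2[OF pN] F(1,2) _ _ e]) (use pN F in \<open>auto simp: HM_simps hom_def\<close>)
  qed
  have full: "\<And>Z X F. obj Z \<Longrightarrow> obj X \<Longrightarrow> F \<in> Arr (HM C T) \<Longrightarrow> fst F = hlO C T Z \<Longrightarrow> fst (snd F) = hlO C T X \<Longrightarrow>
      \<exists>u. arr u \<and> dom u = Z \<and> cod u = X \<and> Tm u = snd (snd F)"
  proof -
    fix Z X F assume a: "obj Z" "obj X" "F \<in> Arr (HM C T)" "fst F = hlO C T Z" "fst (snd F) = hlO C T X"
    note pZ = phiP[OF a(1)] and pX = phiP[OF a(2)] and gF = Gtyp[OF a(3)]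
    define u where "u = inv (phi X) \<cdot> (GM F \<cdot> phi Z)"
    have ut: "arr u" "dom u = Z" "cod u = X" using pZ pX gF a by (auto simp: u_def)
    have "GM (hlM C T u) \<cdot> phi Z = phi X \<cdot> u" using phiN[OF ut(1)] ut by simp
    also have "\<dots> = GM F \<cdot> phi Z" using pZ pX gF a by (simp add: u_def)
    finally have e: "GM (hlM C T u) \<cdot> phi Z = GM F \<cdot> phi Z" .
    have gu: "arr (GM (hlM C T u))" "dom (GM (hlM C T u)) = GO (hlO C T Z)"
      using Gtyp[OF hlM_arr[OF ut(1)]] ut by (auto simp: hlM_def)
    have gg: "GM (hlM C T u) = GM F"
      by (rule iso_cancel_right[of "phi Z", OF _ _ _ _ _ e]) (use pZ gu gF a in auto)
    have "hlM C T u = F"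
      by (rule faithG[OF hlM_arr[OF ut(1)] a(3) _ _ gg]) (use ut a in \<open>auto simp: hlM_def\<close>)
    hence "Tm u = snd (snd F)" by (auto simp: hlM_def)
    thus "\<exists>u. arr u \<and> dom u = Z \<and> cod u = X \<and> Tm u = snd (snd F)" using ut by blast
  qed
  have cons: "conservative C T"
    unfolding conservative_def
  proof (intro ballI impI)
    fix f assume f: "f \<in> Arr C" and i: "iso C (Tm f)"
    have "iso (HM C T) (hlM C T f)"
      unfolding hlM_def by (rule iso_HM[OF hopf_hlO hopf_hlO hmor_hlM i]) (use f in auto)
    hence "iso C (GM (hlM C T f))" by (rule functor_iso[OF G])
    hence "iso C (inv (phi (cod f)) \<cdot> (GM (hlM C T f) \<cdot> phi (dom f)))"
      using phiP[of "dom f"] phiP[of "cod f"] Gtyp[OF hlM_arr[OF f]] f by (auto simp: hlM_def)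
    moreover have "inv (phi (cod f)) \<cdot> (GM (hlM C T f) \<cdot> phi (dom f)) = f"
      using phiN[OF f, symmetric] phiP[of "dom f"] phiP[of "cod f"] Gtyp[OF hlM_arr[OF f]] f
      by (simp add: hlM_def)
    ultimately show "iso C f" by simp
  qed
  have coinvX: "\<And>M r \<rho>. hopf_module C T (M, r, \<rho>) \<Longrightarrow> \<exists>X q. obj X \<and> hopf_morphism C T (hlO C T X) (M, r, \<rho>) q \<and>
      iso C q \<and> is_equalizer C (\<eta> u1 \<otimes> idt M) \<rho> X (q \<cdot> \<eta> X)"
  proof -
    fix M r \<rho> assume h0: "hopf_module C T (M, r, \<rho>)"
    note a = h[OF h0]
    define X where "X = GO (M, r, \<rho>)"
    note pP = psiP[OF h0]
    obtain p where pe: "psi (M, r, \<rho>) = ((M, r, \<rho>), hlO C T X, p)"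
      using pP unfolding X_def by (cases "psi (M, r, \<rho>)") (auto simp: hom_def HM_simps)
    have hp: "hopf_module C T (hlO C T X)" "hopf_morphism C T (M, r, \<rho>) (hlO C T X) p"
      using pP pe by (auto simp: hom_def HM_simps)
    obtain Q where Q: "Q \<in> hom (HM C T) (hlO C T X) (M, r, \<rho>)"
        "Cmp (HM C T) Q (psi (M, r, \<rho>)) = Idt (HM C T) (M, r, \<rho>)"
        "Cmp (HM C T) (psi (M, r, \<rho>)) Q = Idt (HM C T) (hlO C T X)"
      using pP pe unfolding iso_def by (auto simp: HM_simps)
    obtain q where qe: "Q = (hlO C T X, (M, r, \<rho>), q)" using Q(1) by (cases Q) (auto simp: hom_def HM_simps)
    have hq: "hopf_morphism C T (hlO C T X) (M, r, \<rho>) q" using Q(1) qe by (auto simp: hom_def HM_simps)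
    have X: "obj X" using G h0 unfolding functor_def X_def by (auto simp: HM_simps)
    have pt: "arr p" "dom p = M" "cod p = To X" using hp(2) by (auto simp: hlO_def hmor_iff)
    have qt: "arr q" "dom q = To X" "cod q = M" "q \<cdot> \<mu> X = r \<cdot> Tm q" using hq by (auto simp: hlO_def hmor_iff)
    have qp: "q \<cdot> p = idt M" and pq: "p \<cdot> q = idt (To X)" using Q(2,3) pe qe by (auto simp: HM_simps hlO_def)
    have iq: "iso C q" using qp pq pt qt by (intro isoI[where g=p]) auto
    have hX: "hopf_module C T (To X, \<mu> X, Tt u1 X)" using hopf_hlO[OF X] by (simp add: hlO_def)
    have hq': "hopf_morphism C T (To X, \<mu> X, Tt u1 X) (M, r, \<rho>) q" using hq by (simp add: hlO_def)
    have hp': "hopf_morphism C T (M, r, \<rho>) (To X, \<mu> X, Tt u1 X) p" using hp by (simp add: hlO_def)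
    have fk: "\<rho> \<cdot> (q \<cdot> \<eta> X) = (\<eta> u1 \<otimes> idt M) \<cdot> (q \<cdot> \<eta> X)"
      by (rule fork_hmor[OF hX h0 hq']) (use X fork_eta[OF X] in auto)
    have eq: "is_equalizer C (\<eta> u1 \<otimes> idt M) \<rho> X (q \<cdot> \<eta> X)"
      unfolding is_equalizer_def
    proof (intro conjI ballI impI)
      show "(\<eta> u1 \<otimes> idt M) \<cdot> (q \<cdot> \<eta> X) = \<rho> \<cdot> (q \<cdot> \<eta> X)" using fk by simp
    next
      fix Z k assume Z: "Z \<in> Obj C" "k \<in> hom C Z (dom (\<eta> u1 \<otimes> idt M))" "(\<eta> u1 \<otimes> idt M) \<cdot> k = \<rho> \<cdot> k"
      have k: "arr k" "dom k = Z" "cod k = M" using Z a by auto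
      define Kk where "Kk = r \<cdot> Tm k"
      have hK: "hopf_morphism C T (To Z, \<mu> Z, Tt u1 Z) (M, r, \<rho>) Kk"
        using hmor_free[OF h0 Z(1) k] Z(3) by (simp add: Kk_def hlO_def)
      have Kt: "arr Kk" "dom Kk = To Z" "cod Kk = M" using k a by (auto simp: Kk_def)
      have F1: "(hlO C T Z, hlO C T X, p \<cdot> Kk) \<in> Arr (HM C T)"
        using hmor_comp[OF _ h0 hX hK hp'] hopf_hlO[OF Z(1)] hX by (simp add: HM_simps hlO_def)
      obtain u where u: "arr u" "dom u = Z" "cod u = X" "Tm u = p \<cdot> Kk"
        using full[OF Z(1) X F1] by auto
      have tu: "\<And>u'. arr u' \<Longrightarrow> dom u' = Z \<Longrightarrow> cod u' = X \<Longrightarrow> (q \<cdot> \<eta> X) \<cdot> u' = k \<Longrightarrow> Tm u' = p \<cdot> Kk"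
      proof -
        fix u' assume u': "arr u'" "dom u' = Z" "cod u' = X" "(q \<cdot> \<eta> X) \<cdot> u' = k"
        have "Kk = r \<cdot> Tm ((q \<cdot> \<eta> X) \<cdot> u')" using u'(4) by (simp add: Kk_def)
        also have "\<dots> = (r \<cdot> Tm q) \<cdot> (Tm (\<eta> X) \<cdot> Tm u')" using u'(1-3) qt X a by simp
        also have "\<dots> = q \<cdot> Tm u'" using u'(1-3) qt X a by (simp add: qt(4)[symmetric] tail2[OF mu_eta2])
        finally have "Kk = q \<cdot> Tm u'" .
        hence "p \<cdot> Kk = (p \<cdot> q) \<cdot> Tm u'" using u' qt pt X by simp
        thus "Tm u' = p \<cdot> Kk" using pq u' X by simp
      qed
      show "\<exists>!u. u \<in> hom C Z X \<and> (q \<cdot> \<eta> X) \<cdot> u = k"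
      proof (rule ex1I[where a=u])
        have "(q \<cdot> \<eta> X) \<cdot> u = q \<cdot> (Tm u \<cdot> \<eta> Z)" using u qt X by (simp add: eta_nat')
        also have "\<dots> = (q \<cdot> p) \<cdot> (Kk \<cdot> \<eta> Z)" using u qt pt Kt X Z by simp
        also have "\<dots> = r \<cdot> (Tm k \<cdot> \<eta> Z)" using qp Kt Z k a by (simp add: Kk_def)
        also have "\<dots> = (r \<cdot> \<eta> M) \<cdot> k"
        proof -
          have ek: "Tm k \<cdot> \<eta> Z = \<eta> M \<cdot> k" using eta_nat[of k] k by simp
          show ?thesis using k a by (simp add: ek tail2[OF a(7)])
        qed
        also have "\<dots> = k" using k a by simp
        finally show "u \<in> hom C Z X \<and> (q \<cdot> \<eta> X) \<cdot> u = k" using u by simp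
      next
        fix u' assume u': "u' \<in> hom C Z X \<and> (q \<cdot> \<eta> X) \<cdot> u' = k"
        hence "Tm u' = Tm u" using tu u by auto
        thus "u' = u" using faith u u' by auto
      qed
    qed (use a X qt in auto)
    show "\<exists>X q. obj X \<and> hopf_morphism C T (hlO C T X) (M, r, \<rho>) q \<and> iso C q \<and>
      is_equalizer C (\<eta> u1 \<otimes> idt M) \<rho> X (q \<cdot> \<eta> X)" using X hq iq eq by blast
  qed
  have hc: "has_coinvariant_parts C T"
    unfolding has_coinvariant_parts_def
  proof (intro allI impI)
    fix MM assume h0: "hopf_module C T MM"
    obtain M r \<rho> where MM: "MM = (M, r, \<rho>)" by (cases MM)
    show "\<exists>E i. coinvariant_part C T MM E i" using coinvX[OF h0[unfolded MM]] MM coinv_iff by blast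
  qed
  have pr: "preserves_coinvariant_parts C T"
    unfolding preserves_coinvariant_parts_def
  proof (intro allI impI)
    fix M r \<rho> E i' assume h0: "hopf_module C T (M, r, \<rho>)" and ci: "coinvariant_part C T (M, r, \<rho>) E i'"
    note a = h[OF h0]
    have eqi': "is_equalizer C (\<eta> u1 \<otimes> idt M) \<rho> E i'" using ci coinv_iff by blast
    obtain X q where Xq: "obj X" "hopf_morphism C T (hlO C T X) (M, r, \<rho>) q" "iso C q"
        "is_equalizer C (\<eta> u1 \<otimes> idt M) \<rho> X (q \<cdot> \<eta> X)"
      using coinvX[OF h0] by blast
    have qt: "arr q" "dom q = To X" "cod q = M" "q \<cdot> \<mu> X = r \<cdot> Tm q" using Xq(2) by (auto simp: hlO_def hmor_iff)
    note e1 = eq_props[OF eqi'] and e2 = eq_props[OF Xq(4)]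
    obtain e where e: "arr e" "dom e = E" "cod e = X" "(q \<cdot> \<eta> X) \<cdot> e = i'"
      using eq_lift[OF Xq(4), of i'] e1 by auto
    have ie: "iso C e" by (rule eq_comparison_iso[OF Xq(4) eqi' e])
    have eps: "r \<cdot> Tm i' = q \<cdot> Tm e"
    proof -
      have "r \<cdot> Tm i' = (r \<cdot> Tm q) \<cdot> (Tm (\<eta> X) \<cdot> Tm e)" using e(4)[symmetric] e(1-3) qt Xq(1) a by simp
      also have "\<dots> = q \<cdot> Tm e" using e qt Xq(1) a by (simp add: qt(4)[symmetric] tail2[OF mu_eta2])
      finally show ?thesis .
    qed
    have ieps: "iso C (r \<cdot> Tm i')" unfolding eps using Xq(3) Tm_iso[OF ie] e qt by simp
    have fT: "Tm (\<eta> u1 \<otimes> idt M) \<cdot> Tm i' = Tm \<rho> \<cdot> Tm i'" by (rule Tm_pair) (use a e1 in auto)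
    have "Tm i' = (Ki M r \<cdot> \<rho>) \<cdot> (r \<cdot> Tm i')"
      using J3[OF h0, of "Tm i'"] fT a e1 by simp
    moreover have "is_equalizer C (Tm (\<eta> u1 \<otimes> idt M)) (Tm \<rho>) (dom (r \<cdot> Tm i')) ((Ki M r \<cdot> \<rho>) \<cdot> (r \<cdot> Tm i'))"
      by (rule eq_iso_pre[OF j_equalizer[OF h0] ieps]) (use a e1 in auto)
    moreover have "dom (r \<cdot> Tm i') = To E" using a e1 by simp
    ultimately show "is_equalizer C (Tm (\<eta> u1 \<otimes> idt M)) (Tm \<rho>) (To E) (Tm i')" by simp
  qed
  show ?thesis using cons hc pr by blast
qed

end

theorem mainTheorem17:
  fixes C :: "('o, 'm) mcat" and T :: "('o, 'm) bimonad_data"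
  assumes "left_pre_hopf C T"
  shows "(equivalence C (HM C T) (hlO C T) (hlM C T) \<longleftrightarrow>
            conservative C T \<and> has_coinvariant_parts C T \<and> preserves_coinvariant_parts C T) \<and>
         (conservative C T \<and> has_coinvariant_parts C T \<and> preserves_coinvariant_parts C T \<longrightarrow>
            (\<forall>GO GM \<iota>. coinvariant_functor C T GO GM \<iota> \<longrightarrow>
               quasi_inverse C (HM C T) (hlO C T) (hlM C T) GO GM))"
proof -
  interpret lph C T by (rule lph.intro) (rule assms)
  show ?thesis
  proof (intro conjI)
    show "equivalence C (HM C T) (hlO C T) (hlM C T) \<longleftrightarrow>
            conservative C T \<and> has_coinvariant_parts C T \<and> preserves_coinvariant_parts C T"
    proof
      assume "equivalence C (HM C T) (hlO C T) (hlM C T)"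
      then obtain GO GM where "quasi_inverse C (HM C T) (hlO C T) (hlM C T) GO GM"
        unfolding equivalence_def by blast
      thus "conservative C T \<and> has_coinvariant_parts C T \<and> preserves_coinvariant_parts C T"
        by (rule equiv_ii)
    next
      assume a: "conservative C T \<and> has_coinvariant_parts C T \<and> preserves_coinvariant_parts C T"
      obtain GO GM \<iota> where "coinvariant_functor C T GO GM \<iota>" using cf_exists a by blast
      hence "quasi_inverse C (HM C T) (hlO C T) (hlM C T) GO GM" using qi a by blast
      thus "equivalence C (HM C T) (hlO C T) (hlM C T)" unfolding equivalence_def by blast
    qed
    show "conservative C T \<and> has_coinvariant_parts C T \<and> preserves_coinvariant_parts C T \<longrightarrow>
            (\<forall>GO GM \<iota>. coinvariant_functor C T GO GM \<iota> \<longrightarrow>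
               quasi_inverse C (HM C T) (hlO C T) (hlM C T) GO GM)"
      using qi by blast
  qed
qed

end
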